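(* Let $\mu$ be a non-homogeneous Gibbs capacity and $\eta\in(0,1)$. With probability 1, for every $x\in[0,1]^d$, $$\liminf_{j\to\infty}\frac{\log_2\widetilde{\mathsf M}_\mu(I_{x_{|j}})}{-j}\ \ge\ H_\ell(\eta_\ell).$$
   Context: Fix $d\ge1$; $\Sigma_j$ is the set of words of length $j$ over $\{0,1\}^d$, $\Sigma^*=\bigcup_{j\ge1}\Sigma_j$, $\Sigma=(\{0,1\}^d)^{\mathbb N_+}$ with standard ultrametric and shift $\sigma$, $[w]$ the cylinder of $w$, $|w|$ the length, $wv$ concatenation; for $w\in\Sigma_j$, $I_w=\prod_{i=1}^d[x_w^{(i)},x_w^{(i)}+2^{-j}]$, $x_w^{(i)}=\sum_{k=1}^jw_k^{(i)}2^{-k}$. For $w\in\Sigma_j$, $\mathcal N_j(w)$ is the set of $u\in\Sigma_j$ such that $I_u$ equals or is a neighbour (shares a boundary point) of $I_w$. A point $x\in[0,1]^d$ is coded by the binary expansions of its coordinates (lexicographically largest for dyadic coordinates), $x_{|j}$ denoting the prefix of length $j$. A Gibbs capacity is $\mu(I_w)=K\nu([w])^\alpha e^{-\beta|w|}$ with $K>0$, $(\alpha,\beta)\in[0,\infty)^2\setminus\{(0,0)\}$, $\nu$ a Gibbs measure on $\Sigma$ for a Hölder potential $\psi$: $C^{-1}e^{\Psi([w])-|w|P(\sigma,\psi)}\le\nu([w])\le Ce^{\Psi([w])-|w|P(\sigma,\psi)}$, $\Psi([w])=\sup_{t\in[w]}\sum_{i<|w|}\psi(\sigma^it)$, $P$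 the pressure. Non-homogeneous: $\alpha>0$ and $\psi$ not cohomologous to a constant. $\tau_\mu(q)=\lim_j-\frac1j\log_2\sum_{w\in\Sigma_j}\mu(I_w)^q$ and $D_\mu=\tau_\mu^*$ (Legendre transform $\inf_q(qH-\tau_\mu(q))$); $H_\ell(\eta_\ell)=\min\{H\ge0:D_\mu(H)\ge d(1-\eta)\}$. Sampling: $(p_w)$ independent Bernoulli with $\mathbb P(p_w=1)=2^{-d(1-\eta)|w|}$; $\mathsf M_\mu(I_w)=\max\{\mu(I_{wv}):v\in\Sigma^*,p_{wv}=1\}$ and $\widetilde{\mathsf M}_\mu(I_w)=\max_{u\in\mathcal N_{|w|}(w)}\mathsf M_\mu(I_u)$. *)

theory Defs
  imports "HOL-Probability.Probability"
begin

text \<open>Letters of the alphabet {0,1}^d are functions 'd => bool, where d = CARD('d).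
  Words are lists of letters; infinite words (points of Sigma) are functions nat => letter
  (position 0 corresponds to the first letter).\<close>

type_synonym 'd letter = "'d \<Rightarrow> bool"
type_synonym 'd seq = "nat \<Rightarrow> 'd letter"

definition cyl :: "'d letter list \<Rightarrow> 'd seq set" where
  "cyl w = {t. \<forall>i<length w. t i = w ! i}"

definition shiftn :: "nat \<Rightarrow> 'd seq \<Rightarrow> 'd seq" where
  "shiftn i t = (\<lambda>n. t (n + i))"

definition shift :: "'d seq \<Rightarrow> 'd seq" where
  "shift t = (\<lambda>n. t (Suc n))"

definition seq_dist :: "'d seq \<Rightarrow> 'd seq \<Rightarrow> real" where
  "seq_dist s t = (if s = t then 0 else (1/2) ^ (LEAST n. s n \<noteq> t n))"

definition holder_potential :: "('d seq \<Rightarrow> real) \<Rightarrow> bool" where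
  "holder_potential \<psi> \<longleftrightarrow> (\<exists>C \<gamma>. \<gamma> > 0 \<and>
      (\<forall>s t. \<bar>\<psi> s - \<psi> t\<bar> \<le> C * seq_dist s t powr \<gamma>))"

definition seq_continuous :: "('d seq \<Rightarrow> real) \<Rightarrow> bool" where
  "seq_continuous u \<longleftrightarrow> (\<forall>s. \<forall>\<epsilon>>0. \<exists>\<delta>>0. \<forall>t. seq_dist s t < \<delta> \<longrightarrow> \<bar>u s - u t\<bar> < \<epsilon>)"

definition cohomologous_to_constant :: "('d seq \<Rightarrow> real) \<Rightarrow> bool" where
  "cohomologous_to_constant \<psi> \<longleftrightarrow>
     (\<exists>u c. seq_continuous u \<and> (\<forall>t. \<psi> t = u (shift t) - u t + c))"

definition Psi :: "('d seq \<Rightarrow> real) \<Rightarrow> 'd letter list \<Rightarrow> real" where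
  "Psi \<psi> w = (SUP t\<in>cyl w. \<Sum>i<length w. \<psi> (shiftn i t))"

definition pressure :: "('d::finite seq \<Rightarrow> real) \<Rightarrow> real" where
  "pressure \<psi> = lim (\<lambda>n. ln (\<Sum>w\<in>{w::'d letter list. length w = n}. exp (Psi \<psi> w)) / real n)"

text \<open>Borel sigma-algebra of Sigma (= product sigma-algebra of discrete factors).\<close>
definition seq_space :: "'d seq measure" where
  "seq_space = PiM UNIV (\<lambda>_. count_space UNIV)"

definition gibbs_measure :: "('d::finite seq \<Rightarrow> real) \<Rightarrow> 'd seq measure \<Rightarrow> bool" where
  "gibbs_measure \<psi> \<nu> \<longleftrightarrow> prob_space \<nu> \<and> sets \<nu> = sets seq_space \<and>
     (\<exists>C>0. \<forall>w::'d letter list. length w \<ge> 1 \<longrightarrow>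
        inverse C * exp (Psi \<psi> w - real (length w) * pressure \<psi>) \<le> measure \<nu> (cyl w) \<and>
        measure \<nu> (cyl w) \<le> C * exp (Psi \<psi> w - real (length w) * pressure \<psi>))"

text \<open>Gibbs capacity: mu(I_w) = K nu([w])^alpha e^(-beta |w|).\<close>
definition gcap :: "real \<Rightarrow> real \<Rightarrow> real \<Rightarrow> 'd seq measure \<Rightarrow> 'd letter list \<Rightarrow> real" where
  "gcap K \<alpha> \<beta> \<nu> w = K * measure \<nu> (cyl w) powr \<alpha> * exp (- \<beta> * real (length w))"

definition tau :: "real \<Rightarrow> real \<Rightarrow> real \<Rightarrow> 'd::finite seq measure \<Rightarrow> real \<Rightarrow> real" where
  "tau K \<alpha> \<beta> \<nu> q = lim (\<lambda>j. - log 2 (\<Sum>w\<in>{w::'d letter list. length w = j}. gcap K \<alpha> \<beta> \<nu> w powr q) / real j)"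

definition Dspec :: "real \<Rightarrow> real \<Rightarrow> real \<Rightarrow> 'd::finite seq measure \<Rightarrow> real \<Rightarrow> ereal" where
  "Dspec K \<alpha> \<beta> \<nu> H = (INF q. ereal (q * H - tau K \<alpha> \<beta> \<nu> q))"

definition H_l :: "real \<Rightarrow> real \<Rightarrow> real \<Rightarrow> 'd::finite seq measure \<Rightarrow> real \<Rightarrow> real" where
  "H_l K \<alpha> \<beta> \<nu> \<eta> = Inf {H. H \<ge> 0 \<and> Dspec K \<alpha> \<beta> \<nu> H \<ge> ereal (real CARD('d) * (1 - \<eta>))}"

definition corner :: "'d letter list \<Rightarrow> 'd \<Rightarrow> real" where
  "corner w i = (\<Sum>k<length w. (if (w ! k) i then 1 else 0) / 2 ^ (k + 1))"

definition cube :: "'d letter list \<Rightarrow> (real ^ 'd) set" where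
  "cube w = {y. \<forall>i. corner w i \<le> y $ i \<and> y $ i \<le> corner w i + 1 / 2 ^ length w}"

definition nbrs :: "'d::finite letter list \<Rightarrow> 'd letter list set" where
  "nbrs w = {u. length u = length w \<and> (u = w \<or> frontier (cube u) \<inter> frontier (cube w) \<noteq> {})}"

text \<open>k-th binary digit (k >= 1) of t in [0,1], lexicographically largest expansion.\<close>
definition bdigit :: "real \<Rightarrow> nat \<Rightarrow> bool" where
  "bdigit t k = (if t = 1 then True else odd \<lfloor>2 ^ k * t\<rfloor>)"

definition xprefix :: "real ^ 'd \<Rightarrow> nat \<Rightarrow> 'd letter list" where
  "xprefix x j = map (\<lambda>k. \<lambda>i. bdigit (x $ i) (k + 1)) [0..<j]"

definition sampling :: "'a measure \<Rightarrow> real \<Rightarrow> ('d::finite letter list \<Rightarrow> 'a \<Rightarrow> bool) \<Rightarrow> bool" where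
  "sampling \<Omega> \<eta> p \<longleftrightarrow> prob_space \<Omega> \<and>
     prob_space.indep_vars \<Omega> (\<lambda>_. count_space UNIV) p {w. w \<noteq> []} \<and>
     (\<forall>w. w \<noteq> [] \<longrightarrow> measure \<Omega> {\<omega>\<in>space \<Omega>. p w \<omega>} = 2 powr (- real CARD('d) * (1 - \<eta>) * real (length w)))"

definition Msamp :: "real \<Rightarrow> real \<Rightarrow> real \<Rightarrow> 'd seq measure \<Rightarrow> ('d letter list \<Rightarrow> 'a \<Rightarrow> bool)
     \<Rightarrow> 'a \<Rightarrow> 'd letter list \<Rightarrow> real" where
  "Msamp K \<alpha> \<beta> \<nu> p \<omega> w = Sup {gcap K \<alpha> \<beta> \<nu> (w @ v) | v. v \<noteq> [] \<and> p (w @ v) \<omega>}"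

definition Mtilde :: "real \<Rightarrow> real \<Rightarrow> real \<Rightarrow> 'd::finite seq measure \<Rightarrow> ('d letter list \<Rightarrow> 'a \<Rightarrow> bool)
     \<Rightarrow> 'a \<Rightarrow> 'd letter list \<Rightarrow> real" where
  "Mtilde K \<alpha> \<beta> \<nu> p \<omega> w = Max ((\<lambda>u. Msamp K \<alpha> \<beta> \<nu> p \<omega> u) ` nbrs w)"

end

theory Submission
  imports Defs "HOL-Library.Cardinality"
begin


lemma cyl_nonempty: "\<exists>t. t \<in> cyl w"
  by (rule exI[of _ "\<lambda>i. if i < length w then w ! i else (\<lambda>_. False)"]) (simp add: cyl_def)

lemma shiftn_shiftn: "shiftn i (shiftn m t) = shiftn (m+i) t"
  by (rule ext) (simp add: shiftn_def algebra_simps)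

lemma cyl_append: "t \<in> cyl (u@v) \<longleftrightarrow> t \<in> cyl u \<and> shiftn (length u) t \<in> cyl v"
proof
  assume t: "t \<in> cyl (u@v)"
  have "t \<in> cyl u" unfolding cyl_def
  proof (intro CollectI allI impI)
    fix i assume "i < length u"
    then show "t i = u ! i" using t unfolding cyl_def by (auto simp: nth_append)
  qed
  moreover have "shiftn (length u) t \<in> cyl v" unfolding cyl_def
  proof (intro CollectI allI impI)
    fix i assume i: "i < length v"
    have "t (i + length u) = (u@v) ! (length u + i)" using t i unfolding cyl_def by (simp add: add.commute)
    then show "shiftn (length u) t i = v ! i" by (simp add: shiftn_def)
  qed
  ultimately show "t \<in> cyl u \<and> shiftn (length u) t \<in> cyl v" by blast
next
  assume a: "t \<in> cyl u \<and> shiftn (length u) t \<in> cyl v"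
  show "t \<in> cyl (u@v)" unfolding cyl_def
  proof (intro CollectI allI impI)
    fix i assume i: "i < length (u@v)"
    show "t i = (u@v) ! i"
    proof (cases "i < length u")
      case True then show ?thesis using a unfolding cyl_def by (simp add: nth_append)
    next
      case False
      then have "i - length u < length v" using i by simp
      then have "shiftn (length u) t (i - length u) = v ! (i - length u)" using a unfolding cyl_def by blast
      then show ?thesis using False by (simp add: shiftn_def nth_append)
    qed
  qed
qed

definition birk :: "('d seq \<Rightarrow> real) \<Rightarrow> nat \<Rightarrow> 'd seq \<Rightarrow> real" where
  "birk \<psi> n t = (\<Sum>i<n. \<psi> (shiftn i t))"

lemma birk_split: "birk \<psi> (m+n) t = birk \<psi> m t + birk \<psi> n (shiftn m t)"
proof (induct n)
  case 0 then show ?case by (simp add: birk_def)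
next
  case (Suc n)
  have "birk \<psi> (m + Suc n) t = birk \<psi> (m+n) t + \<psi> (shiftn (m+n) t)"
    by (simp add: birk_def)
  also have "\<dots> = birk \<psi> m t + birk \<psi> (Suc n) (shiftn m t)"
    using Suc by (simp add: birk_def shiftn_shiftn)
  finally show ?case .
qed

lemma Psi_birk: "Psi \<psi> w = (SUP t\<in>cyl w. birk \<psi> (length w) t)"
  by (simp add: Psi_def birk_def)

lemma seq_dist_nonneg: "0 \<le> seq_dist s t"
  by (simp add: seq_dist_def)

lemma seq_dist_le: assumes "\<forall>k<n. s k = t k" shows "seq_dist s t \<le> (1/2)^n"
proof (cases "s = t")
  case True then show ?thesis by (simp add: seq_dist_def)
next
  case False
  then obtain k where k: "s k \<noteq> t k" by auto
  have "n \<le> (LEAST k. s k \<noteq> t k)"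
  proof (rule ccontr)
    assume "\<not> n \<le> (LEAST k. s k \<noteq> t k)"
    then have "(LEAST k. s k \<noteq> t k) < n" by simp
    moreover have "s (LEAST k. s k \<noteq> t k) \<noteq> t (LEAST k. s k \<noteq> t k)" using k by (rule LeastI)
    ultimately show False using assms by blast
  qed
  then show ?thesis using False by (simp add: seq_dist_def power_decreasing)
qed

lemma seq_dist_le1: "seq_dist s t \<le> 1"
  using seq_dist_le[of 0 s t] by simp

lemma powr_pow_commute: "0 \<le> x \<Longrightarrow> (x ^ n) powr g = (x powr g) ^ n" for x g :: real
  by (induct n) (auto simp: powr_mult)

context
  fixes \<psi> :: "'d seq \<Rightarrow> real" and C0 \<gamma> :: real
  assumes hol: "\<And>s t. \<bar>\<psi> s - \<psi> t\<bar> \<le> C0 * seq_dist s t powr \<gamma>"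
    and gpos: "\<gamma> > 0" and C0: "C0 \<ge> 0"
begin

lemma psi_bounded: "\<bar>\<psi> s\<bar> \<le> \<bar>\<psi> t\<bar> + C0"
proof -
  have "seq_dist s t powr \<gamma> \<le> 1 powr \<gamma>"
    by (rule powr_mono2) (use gpos seq_dist_nonneg seq_dist_le1 in auto)
  then have "C0 * seq_dist s t powr \<gamma> \<le> C0" using C0 by (simp add: mult_left_le)
  then show ?thesis using hol[of s t] by linarith
qed

definition "\<rho> = (1/2::real) powr \<gamma>"

lemma rho: "0 < \<rho>" "\<rho> < 1"
proof -
  show "0 < \<rho>" by (simp add: \<rho>_def)
  have "(1/2::real) powr \<gamma> < 1 powr \<gamma>" by (rule powr_less_mono2) (use gpos in auto)
  then show "\<rho> < 1" by (simp add: \<rho>_def)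
qed

definition "Dst = C0 / (1 - \<rho>)"

lemma Dst_nonneg: "0 \<le> Dst" using rho C0 by (simp add: Dst_def)

lemma distortion:
  assumes s: "s \<in> cyl w" and t: "t \<in> cyl w"
  shows "\<bar>birk \<psi> (length w) s - birk \<psi> (length w) t\<bar> \<le> Dst"
proof -
  define n where "n = length w"
  have each: "\<bar>\<psi> (shiftn i s) - \<psi> (shiftn i t)\<bar> \<le> C0 * \<rho> ^ (n - i)" if "i < n" for i
  proof -
    have "\<forall>k<n-i. shiftn i s k = shiftn i t k"
    proof (intro allI impI)
      fix k assume "k < n - i"
      then have "k + i < length w" unfolding n_def by simp
      then show "shiftn i s k = shiftn i t k" using s t unfolding cyl_def shiftn_def by simp
    qed
    then have "seq_dist (shiftn i s) (shiftn i t) \<le> (1/2)^(n-i)" by (rule seq_dist_le)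
    then have "seq_dist (shiftn i s) (shiftn i t) powr \<gamma> \<le> ((1/2)^(n-i)) powr \<gamma>"
      by (intro powr_mono2) (use gpos seq_dist_nonneg in auto)
    also have "\<dots> = \<rho> ^ (n-i)" by (simp add: powr_pow_commute \<rho>_def)
    finally have "C0 * seq_dist (shiftn i s) (shiftn i t) powr \<gamma> \<le> C0 * \<rho> ^ (n-i)"
      using C0 by (rule mult_left_mono)
    then show ?thesis using hol[of "shiftn i s" "shiftn i t"] by linarith
  qed
  have "\<bar>birk \<psi> n s - birk \<psi> n t\<bar> = \<bar>\<Sum>i<n. \<psi> (shiftn i s) - \<psi> (shiftn i t)\<bar>"
    by (simp add: birk_def sum_subtractf)
  also have "\<dots> \<le> (\<Sum>i<n. \<bar>\<psi> (shiftn i s) - \<psi> (shiftn i t)\<bar>)" by (rule sum_abs)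
  also have "\<dots> \<le> (\<Sum>i<n. C0 * \<rho> ^ (n - i))" by (rule sum_mono) (use each in auto)
  also have "(\<Sum>i<n. C0 * \<rho> ^ (n - i)) = (\<Sum>i<n. C0 * \<rho> ^ (Suc (n - Suc i)))"
    by (rule sum.cong) (auto simp: Suc_diff_Suc)
  also have "\<dots> = (\<Sum>i<n. C0 * \<rho> ^ (Suc i))"
    using sum.nat_diff_reindex[where g="\<lambda>i. C0 * \<rho> ^ (Suc i)" and n=n] by simp
  also have "\<dots> = C0 * \<rho> * (\<Sum>i<n. \<rho> ^ i)" by (simp add: sum_distrib_left mult.assoc)
  also have "(\<Sum>i<n. \<rho> ^ i) = (1 - \<rho>^n) / (1 - \<rho>)" using rho by (simp add: sum_gp_strict)
  also have "C0 * \<rho> * ((1 - \<rho>^n) / (1 - \<rho>)) \<le> Dst"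
  proof -
    have "0 \<le> \<rho>^n" using rho by simp
    then have "\<rho> * (1 - \<rho>^n) \<le> 1" using rho
      by (intro mult_le_one) (auto simp: power_le_one)
    then have "C0 * (\<rho> * (1 - \<rho>^n)) \<le> C0" using C0 by (simp add: mult_left_le)
    then have "C0 * (\<rho> * (1 - \<rho>^n)) / (1 - \<rho>) \<le> C0 / (1 - \<rho>)"
      using rho by (intro divide_right_mono) auto
    moreover have "C0 * \<rho> * ((1 - \<rho>^n) / (1 - \<rho>)) = C0 * (\<rho> * (1 - \<rho>^n)) / (1 - \<rho>)"
      by simp
    ultimately show ?thesis unfolding Dst_def by simp
  qed
  finally show ?thesis unfolding n_def .
qed

lemma birk_bdd: "\<bar>birk \<psi> n t\<bar> \<le> real n * (\<bar>\<psi> (\<lambda>_. undefined)\<bar> + C0)"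
proof -
  have "\<bar>birk \<psi> n t\<bar> \<le> (\<Sum>i<n. \<bar>\<psi> (shiftn i t)\<bar>)" unfolding birk_def by (rule sum_abs)
  also have "\<dots> \<le> (\<Sum>i<n. \<bar>\<psi> (\<lambda>_. undefined)\<bar> + C0)" by (rule sum_mono) (rule psi_bounded)
  finally show ?thesis by simp
qed

lemma birk_bdd_above: "bdd_above ((\<lambda>t. birk \<psi> n t) ` A)"
  using birk_bdd by (intro bdd_aboveI[where M="real n * (\<bar>\<psi> (\<lambda>_. undefined)\<bar> + C0)"]) (auto simp: abs_le_iff)

lemma Psi_ge: "t \<in> cyl w \<Longrightarrow> birk \<psi> (length w) t \<le> Psi \<psi> w"
  unfolding Psi_birk by (rule cSUP_upper) (auto intro: birk_bdd_above)

lemma Psi_le: assumes t: "t \<in> cyl w" shows "Psi \<psi> w \<le> birk \<psi> (length w) t + Dst"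
  unfolding Psi_birk
proof (rule cSUP_least)
  show "cyl w \<noteq> {}" using t by blast
  fix s assume "s \<in> cyl w"
  from distortion[OF this t] show "birk \<psi> (length w) s \<le> birk \<psi> (length w) t + Dst" by (simp add: abs_le_iff)
qed

lemma Psi_append:
  "Psi \<psi> (u@v) \<le> Psi \<psi> u + Psi \<psi> v" "Psi \<psi> u + Psi \<psi> v - 2 * Dst \<le> Psi \<psi> (u@v)"
proof -
  show "Psi \<psi> (u@v) \<le> Psi \<psi> u + Psi \<psi> v"
    unfolding Psi_birk[of \<psi> "u@v"]
  proof (rule cSUP_least)
    show "cyl (u@v) \<noteq> {}" using cyl_nonempty by blast
    fix t assume "t \<in> cyl (u@v)"
    then have "t \<in> cyl u" "shiftn (length u) t \<in> cyl v" by (auto simp: cyl_append)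
    then show "birk \<psi> (length (u@v)) t \<le> Psi \<psi> u + Psi \<psi> v"
      using Psi_ge[of t u] Psi_ge[of "shiftn (length u) t" v] by (simp add: birk_split)
  qed
  obtain t where t: "t \<in> cyl (u@v)" using cyl_nonempty by blast
  then have "t \<in> cyl u" "shiftn (length u) t \<in> cyl v" by (auto simp: cyl_append)
  then show "Psi \<psi> u + Psi \<psi> v - 2 * Dst \<le> Psi \<psi> (u@v)"
    using Psi_ge[OF t] Psi_le[of t u] Psi_le[of "shiftn (length u) t" v] by (simp add: birk_split)
qed

end




lemma quasi_add_conv:
  fixes a :: "nat \<Rightarrow> real"
  assumes qa: "\<And>m n. m \<ge> 1 \<Longrightarrow> n \<ge> 1 \<Longrightarrow> \<bar>a (m+n) - a m - a n\<bar> \<le> c"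
  shows "convergent (\<lambda>n. a n / real n)"
proof -
  have c0: "c \<ge> 0" using qa[of 1 1] by linarith
  have claim1: "\<bar>a (k*m + r) - real k * a m - a r\<bar> \<le> real k * c" if "m \<ge> 1" "r \<ge> 1" for k m r
  proof (induct k)
    case 0 then show ?case by simp
  next
    case (Suc k)
    have e: "Suc k * m + r = m + (k*m + r)" by simp
    have "\<bar>a (m + (k*m + r)) - a m - a (k*m+r)\<bar> \<le> c" using qa[of m "k*m+r"] that by simp
    then show ?case using Suc unfolding e of_nat_Suc abs_le_iff distrib_right mult_1 by linarith
  qed
  have alg: "\<bar>A/n - Am/m\<bar> \<le> c/m + (\<bar>Ar\<bar> + \<bar>Am\<bar>)/n"
    if "n = k*m + r" "m>0" "0<r" "r \<le> m" "\<bar>A - k*Am - Ar\<bar> \<le> k*c" "k \<ge> 0"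
    for A Am Ar n m r k :: real
  proof -
    have "k*m \<ge> 0" using that by simp
    then have n0: "n > 0" using that by linarith
    have h: "r/m + k = n/m" using that by (simp add: field_simps)
    have "Am*(r/m)/n + k*Am/n = Am*(r/m + k)/n" by (simp add: algebra_simps add_divide_distrib)
    also have "\<dots> = Am*(n/m)/n" using h by simp
    also have "\<dots> = Am/m" using n0 by simp
    finally have h2: "Am*(r/m)/n + k*Am/n = Am/m" .
    have h3: "(A - k*Am - Ar)/n + Ar/n = A/n - k*Am/n" by (simp add: diff_divide_distrib add_divide_distrib)
    have eq: "A/n - Am/m = (A - k*Am - Ar)/n + Ar/n - Am*(r/m)/n"
      using h2 h3 by linarith
    have "\<bar>(A - k*Am - Ar)/n\<bar> = \<bar>A - k*Am - Ar\<bar>/n" using n0 by (simp add: abs_divide)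
    also have "\<dots> \<le> k*c/n" using that(5) n0 by (simp add: divide_right_mono)
    also have "k*c/n \<le> c/m"
    proof -
      have "k*m \<le> n" using that by simp
      then have "c*(k*m) \<le> c*n" using c0 by (rule mult_left_mono)
      then have "(k*c)*m \<le> c*n" by (simp add: ac_simps)
      then show ?thesis using n0 that(2) by (simp add: divide_le_eq le_divide_eq ac_simps)
    qed
    finally have 1: "\<bar>(A - k*Am - Ar)/n\<bar> \<le> c/m" .
    have "\<bar>Am*(r/m)/n\<bar> \<le> \<bar>Am\<bar>/n"
    proof -
      have "\<bar>r/m\<bar> \<le> 1" using that by simp
      then have "\<bar>Am*(r/m)\<bar> \<le> \<bar>Am\<bar>" unfolding abs_mult by (rule mult_left_le) simp
      from divide_right_mono[OF this, of n] show ?thesis using n0 by (simp add: abs_divide abs_mult)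
    qed
    moreover have "\<bar>Ar/n\<bar> = \<bar>Ar\<bar>/n" using n0 by (simp add: abs_divide)
    moreover have "(\<bar>Ar\<bar> + \<bar>Am\<bar>)/n = \<bar>Ar\<bar>/n + \<bar>Am\<bar>/n" by (simp add: add_divide_distrib)
    ultimately show ?thesis unfolding eq using 1 by linarith
  qed
  define B where "B m = \<bar>a m\<bar> + (\<Sum>r\<le>m. \<bar>a r\<bar>)" for m
  have B0: "B m \<ge> 0" for m unfolding B_def by (simp add: sum_nonneg)
  have claim2: "\<bar>a n / n - a m / m\<bar> \<le> c/m + B m / n" if "m \<ge> 1" "n \<ge> 1" for m n
  proof -
    define k where "k = (n-1) div m"
    define r where "r = (n-1) mod m + 1"
    have "n - 1 = k*m + ((n-1) mod m)" unfolding k_def by simp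
    then have nk: "n = k*m + r" using that unfolding r_def by linarith
    have r: "r \<ge> 1" "r \<le> m" unfolding r_def using that
      by (auto simp: Suc_le_eq)
    have c1: "\<bar>a (k*m + r) - real k * a m - a r\<bar> \<le> real k * c" by (rule claim1) (use that r in auto)
    have "\<bar>a n / n - a m / m\<bar> \<le> c/m + (\<bar>a r\<bar> + \<bar>a m\<bar>)/n"
    proof (rule alg)
      show "real n = real k * real m + real r" by (subst nk) simp
      show "\<bar>a n - real k * a m - a r\<bar> \<le> real k * c" using c1 nk by simp
    qed (use that r in auto)
    also have "\<bar>a r\<bar> + \<bar>a m\<bar> \<le> B m" unfolding B_def
      using member_le_sum[of r "{..m}" "\<lambda>r. \<bar>a r\<bar>"] r by auto
    then have "(\<bar>a r\<bar> + \<bar>a m\<bar>)/n \<le> B m / n" by (simp add: divide_right_mono)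
    finally show ?thesis by simp
  qed
  have "Cauchy (\<lambda>n. a n / real n)"
  proof (rule CauchyI)
    fix e :: real assume e: "e > 0"
    define m where "m = nat \<lceil>4*c/e\<rceil> + 1"
    have m1: "m \<ge> 1" unfolding m_def by simp
    have "real m > 4*c/e" unfolding m_def by linarith
    then have "c < e/4 * m" using e by (simp add: field_simps)
    then have cm: "c/m < e/4" using m1 by (simp add: field_simps)
    define N where "N = nat \<lceil>4 * B m/e\<rceil> + 1"
    have "real N > 4 * B m / e" unfolding N_def by linarith
    then have BN: "B m < e/4 * N" using e by (simp add: field_simps)
    have N1: "N \<ge> 1" unfolding N_def by simp
    show "\<exists>M. \<forall>i\<ge>M. \<forall>j\<ge>M. norm (a i / real i - a j / real j) < e"
    proof (intro exI allI impI)
      fix i j assume i: "i \<ge> N" and j: "j \<ge> N"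
      have bi: "B m / i < e/4" if "i \<ge> N" for i :: nat
      proof -
        have "e/4 * N \<le> e/4 * i" using that e by simp
        then have "B m < e/4 * i" using BN by linarith
        then show ?thesis using that N1 by (simp add: field_simps)
      qed
      have "\<bar>a i / i - a m / m\<bar> < e/2" using claim2[OF m1, of i] bi[OF i] cm i N1 by linarith
      moreover have "\<bar>a j / j - a m / m\<bar> < e/2" using claim2[OF m1, of j] bi[OF j] cm j N1 by linarith
      ultimately show "norm (a i / real i - a j / real j) < e" unfolding real_norm_def by linarith
    qed
  qed
  then show ?thesis by (rule Cauchy_convergent)
qed




abbreviation W :: "nat \<Rightarrow> 'd letter list set" where "W n \<equiv> {w. length w = n}"

lemma W_finite: "finite (W n :: 'd::finite letter list set)"
  using finite_lists_length_eq[of "UNIV :: 'd letter set" n] by simp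

lemma W_nonempty: "W n \<noteq> {}"
proof -
  have "replicate n x \<in> W n" for x by simp
  then show ?thesis by blast
qed

lemma sum_W_split:
  fixes f :: "'d::finite letter list \<Rightarrow> real"
  shows "(\<Sum>w\<in>W (m+n). f w) = (\<Sum>u\<in>W m. \<Sum>v\<in>W n. f (u@v))"
proof -
  have inj: "inj_on (\<lambda>(u,v). u@v) (W m \<times> W n :: ('d letter list \<times> 'd letter list) set)"
    by (auto simp: inj_on_def)
  have img: "(\<lambda>(u,v). u@v) ` (W m \<times> W n) = (W (m+n) :: 'd letter list set)"
  proof
    show "(\<lambda>(u,v). u@v) ` (W m \<times> W n) \<subseteq> (W (m+n) :: 'd letter list set)" by auto
    show "(W (m+n) :: 'd letter list set) \<subseteq> (\<lambda>(u,v). u@v) ` (W m \<times> W n)"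
    proof
      fix w :: "'d letter list" assume "w \<in> W (m+n)"
      then show "w \<in> (\<lambda>(u,v). u@v) ` (W m \<times> W n)"
        by (intro image_eqI[of _ _ "(take m w, drop m w)"]) auto
    qed
  qed
  have "(\<Sum>w\<in>W (m+n). f w) = (\<Sum>x\<in>W m \<times> W n. f ((\<lambda>(u,v). u@v) x))"
    unfolding img[symmetric] by (subst sum.reindex[OF inj]) (simp add: comp_def)
  also have "\<dots> = (\<Sum>(u,v)\<in>W m \<times> W n. f (u@v))"
    by (rule sum.cong) auto
  also have "\<dots> = (\<Sum>u\<in>W m. \<Sum>v\<in>W n. f (u@v))"
    by (rule sum.cartesian_product[symmetric])
  finally show ?thesis .
qed

lemma psi_quasi:
  assumes "holder_potential \<psi>"
  shows "\<exists>D. \<forall>u v. Psi \<psi> (u@v) \<le> Psi \<psi> u + Psi \<psi> v \<and> Psi \<psi> u + Psi \<psi> v - D \<le> Psi \<psi> (u@v)"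
proof -
  obtain C \<gamma> where g: "\<gamma> > 0" and h: "\<forall>s t. \<bar>\<psi> s - \<psi> t\<bar> \<le> C * seq_dist s t powr \<gamma>"
    using assms unfolding holder_potential_def by blast
  define C0 where "C0 = max C 0"
  have h0: "\<bar>\<psi> s - \<psi> t\<bar> \<le> C0 * seq_dist s t powr \<gamma>" for s t
  proof -
    have "C * seq_dist s t powr \<gamma> \<le> C0 * seq_dist s t powr \<gamma>"
      unfolding C0_def by (rule mult_right_mono) auto
    then show ?thesis using h by (meson order_trans)
  qed
  have c0: "C0 \<ge> 0" unfolding C0_def by simp
  show ?thesis using Psi_append(1)[OF h0 g c0] Psi_append(2)[OF h0 g c0] by blast
qed

lemma gibbs_pos:
  fixes \<psi> :: "'d::finite seq \<Rightarrow> real" and w :: "'d letter list"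
  assumes "gibbs_measure \<psi> \<nu>" "w \<noteq> []" shows "measure \<nu> (cyl w) > 0"
proof -
  obtain C where C: "C > 0" and Cb: "\<forall>w::'d letter list. length w \<ge> 1 \<longrightarrow>
        inverse C * exp (Psi \<psi> w - real (length w) * pressure \<psi>) \<le> measure \<nu> (cyl w) \<and>
        measure \<nu> (cyl w) \<le> C * exp (Psi \<psi> w - real (length w) * pressure \<psi>)"
    using assms(1) unfolding gibbs_measure_def by blast
  from assms(2) have "length w \<ge> 1" by (cases w) auto
  then have "inverse C * exp (Psi \<psi> w - real (length w) * pressure \<psi>) \<le> measure \<nu> (cyl w)" using Cb by blast
  moreover have "inverse C * exp (Psi \<psi> w - real (length w) * pressure \<psi>) > 0" using C by simp
  ultimately show ?thesis by linarith
qed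

lemma gibbs_quasi:
  fixes \<psi> :: "'d::finite seq \<Rightarrow> real"
  assumes hp: "holder_potential \<psi>" and gm: "gibbs_measure \<psi> \<nu>"
  shows "\<exists>c1 c2. 0 < c1 \<and> 0 < c2 \<and> (\<forall>u v::'d letter list. u \<noteq> [] \<longrightarrow> v \<noteq> [] \<longrightarrow>
     c1 * (measure \<nu> (cyl u) * measure \<nu> (cyl v)) \<le> measure \<nu> (cyl (u@v)) \<and>
     measure \<nu> (cyl (u@v)) \<le> c2 * (measure \<nu> (cyl u) * measure \<nu> (cyl v)))"
proof -
  obtain D where D: "\<forall>u v. Psi \<psi> (u@v) \<le> Psi \<psi> u + Psi \<psi> v \<and> Psi \<psi> u + Psi \<psi> v - D \<le> Psi \<psi> (u@v)"
    using psi_quasi[OF hp] by blast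
  obtain C where C: "C > 0" and Cb: "\<forall>w::'d letter list. length w \<ge> 1 \<longrightarrow>
        inverse C * exp (Psi \<psi> w - real (length w) * pressure \<psi>) \<le> measure \<nu> (cyl w) \<and>
        measure \<nu> (cyl w) \<le> C * exp (Psi \<psi> w - real (length w) * pressure \<psi>)"
    using gm unfolding gibbs_measure_def by blast
  define E where "E w = exp (Psi \<psi> w - real (length w) * pressure \<psi>)" for w :: "'d letter list"
  define m where "m w = measure \<nu> (cyl w)" for w :: "'d letter list"
  have mnn: "m w \<ge> 0" for w unfolding m_def by simp
  have Epos: "E w > 0" for w by (simp add: E_def)
  have lo: "E w \<le> C * m w" and hi: "m w \<le> C * E w" if "w \<noteq> []" for w
  proof -
    have l: "length w \<ge> 1" using that by (cases w) auto
    from Cb l have "inverse C * E w \<le> m w" by (simp add: E_def m_def)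
    then show "E w \<le> C * m w" using C by (simp add: field_simps)
    from Cb l show "m w \<le> C * E w" by (simp add: E_def m_def)
  qed
  have Eup: "E (u@v) \<le> E u * E v" for u v
  proof -
    have "Psi \<psi> (u@v) - real (length (u@v)) * pressure \<psi> \<le>
        (Psi \<psi> u - real (length u) * pressure \<psi>) + (Psi \<psi> v - real (length v) * pressure \<psi>)"
    proof -
      have "Psi \<psi> (u@v) \<le> Psi \<psi> u + Psi \<psi> v" using D by blast
      moreover have "real (length (u@v)) = real (length u) + real (length v)" by simp
      ultimately show ?thesis by (simp add: algebra_simps)
    qed
    then show ?thesis unfolding E_def by (simp add: exp_add[symmetric])
  qed
  have Elo: "exp (-D) * (E u * E v) \<le> E (u@v)" for u v
  proof -
    have "-D + ((Psi \<psi> u - real (length u) * pressure \<psi>) + (Psi \<psi> v - real (length v) * pressure \<psi>))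
        \<le> Psi \<psi> (u@v) - real (length (u@v)) * pressure \<psi>"
    proof -
      have "Psi \<psi> u + Psi \<psi> v - D \<le> Psi \<psi> (u@v)" using D by blast
      moreover have "real (length (u@v)) = real (length u) + real (length v)" by simp
      ultimately show ?thesis by (simp add: algebra_simps)
    qed
    then show ?thesis unfolding E_def by (simp add: exp_add[symmetric])
  qed
  show ?thesis
  proof (intro exI conjI allI impI)
    show "0 < exp (-D) / C^3" using C by simp
    show "0 < C^3" using C by simp
    fix u v :: "'d letter list" assume u: "u \<noteq> []" and v: "v \<noteq> []"
    have uv: "u@v \<noteq> []" using u by simp
    have "m (u@v) \<le> C * E (u@v)" by (rule hi[OF uv])
    also have "\<dots> \<le> C * (E u * E v)" using Eup C by (simp add: mult_left_mono)
    also have "\<dots> \<le> C * ((C * m u) * (C * m v))"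
      using lo[OF u] lo[OF v] Epos[of u] Epos[of v] C mnn[of u]
      by (intro mult_left_mono mult_mono) (auto simp: less_imp_le)
    also have "\<dots> = C^3 * (m u * m v)" by (simp add: power3_eq_cube algebra_simps)
    finally show "measure \<nu> (cyl (u@v)) \<le> C^3 * (measure \<nu> (cyl u) * measure \<nu> (cyl v))"
      by (simp add: m_def)
    have "exp (-D) / C^3 * (m u * m v) = exp (-D) / C * ((m u / C) * (m v / C))"
      using C by (simp add: power3_eq_cube field_simps)
    also have "\<dots> \<le> exp (-D) / C * (E u * E v)"
    proof -
      have "m u \<le> E u * C" using hi[OF u] by (simp add: mult.commute)
      with C have a1: "m u / C \<le> E u" by (simp add: pos_divide_le_eq)
      have "m v \<le> E v * C" using hi[OF v] by (simp add: mult.commute)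
      with C have a2: "m v / C \<le> E v" by (simp add: pos_divide_le_eq)
      from a1 a2 show ?thesis using C mnn[of u] mnn[of v] Epos[of u]
        by (intro mult_left_mono mult_mono) (auto simp: less_imp_le)
    qed
    also have "\<dots> \<le> E (u@v) / C" using Elo[of u v] C by (simp add: divide_right_mono)
    also have "\<dots> \<le> m (u@v)"
    proof -
      have l: "1 \<le> length (u@v)" using u by (cases u) auto
      have "inverse C * E (u@v) \<le> m (u@v)" unfolding E_def m_def using Cb[rule_format, OF l] by (rule conjunct1)
      then show ?thesis by (simp add: divide_inverse mult.commute)
    qed
    finally show "exp (-D) / C^3 * (measure \<nu> (cyl u) * measure \<nu> (cyl v)) \<le> measure \<nu> (cyl (u@v))"
      by (simp add: m_def)
  qed
qed




lemma gcap_pos: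
  fixes \<psi> :: "'d::finite seq \<Rightarrow> real" and w :: "'d letter list"
  assumes "gibbs_measure \<psi> \<nu>" "K > 0" "w \<noteq> []" shows "gcap K \<alpha> \<beta> \<nu> w > 0"
  using gibbs_pos[OF assms(1,3)] assms(2) by (simp add: gcap_def)

lemma gcap_le:
  fixes \<psi> :: "'d::finite seq \<Rightarrow> real" and w :: "'d letter list"
  assumes "gibbs_measure \<psi> \<nu>" "K > 0" "\<alpha> \<ge> 0" "\<beta> \<ge> 0" shows "gcap K \<alpha> \<beta> \<nu> w \<le> K"
proof -
  have p: "prob_space \<nu>" using assms(1) by (simp add: gibbs_measure_def)
  have m1: "measure \<nu> (cyl w) \<le> 1" using prob_space.prob_le_1[OF p] .
  have "measure \<nu> (cyl w) powr \<alpha> \<le> 1 powr \<alpha>" by (rule powr_mono2) (use assms m1 in auto)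
  then have a: "measure \<nu> (cyl w) powr \<alpha> \<le> 1" by simp
  have b: "exp (-\<beta> * real (length w)) \<le> 1" using assms by simp
  have "measure \<nu> (cyl w) powr \<alpha> * exp (-\<beta> * real (length w)) \<le> 1"
    using a b by (intro mult_le_one) auto
  then have "K * (measure \<nu> (cyl w) powr \<alpha> * exp (-\<beta> * real (length w))) \<le> K"
    using assms(2) by (intro mult_left_le) auto
  then show ?thesis unfolding gcap_def by (simp add: mult.assoc)
qed

lemma gcap_quasi:
  fixes \<psi> :: "'d::finite seq \<Rightarrow> real"
  assumes hp: "holder_potential \<psi>" and gm: "gibbs_measure \<psi> \<nu>" and K: "K > 0" and al: "\<alpha> \<ge> 0"
  shows "\<exists>a b. 0 < a \<and> a \<le> b \<and> (\<forall>u v::'d letter list. u \<noteq> [] \<longrightarrow> v \<noteq> [] \<longrightarrow>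
     a * (gcap K \<alpha> \<beta> \<nu> u * gcap K \<alpha> \<beta> \<nu> v) \<le> gcap K \<alpha> \<beta> \<nu> (u@v) \<and>
     gcap K \<alpha> \<beta> \<nu> (u@v) \<le> b * (gcap K \<alpha> \<beta> \<nu> u * gcap K \<alpha> \<beta> \<nu> v))"
proof -
  obtain c1 c2 where c: "0 < c1" "0 < c2" and cb: "\<forall>u v::'d letter list. u \<noteq> [] \<longrightarrow> v \<noteq> [] \<longrightarrow>
     c1 * (measure \<nu> (cyl u) * measure \<nu> (cyl v)) \<le> measure \<nu> (cyl (u@v)) \<and>
     measure \<nu> (cyl (u@v)) \<le> c2 * (measure \<nu> (cyl u) * measure \<nu> (cyl v))"
    using gibbs_quasi[OF hp gm] by blast
  define a where "a = c1 powr \<alpha> / K"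
  define b where "b = max a (c2 powr \<alpha> / K)"
  show ?thesis
  proof (intro exI conjI allI impI)
    show "0 < a" using c K by (simp add: a_def)
    show "a \<le> b" by (simp add: b_def)
    fix u v :: "'d letter list" assume u: "u \<noteq> []" and v: "v \<noteq> []"
    define mu where "mu = measure \<nu> (cyl u)"
    define mv where "mv = measure \<nu> (cyl v)"
    define muv where "muv = measure \<nu> (cyl (u@v))"
    define E where "E = exp (-\<beta> * real (length u)) * exp (-\<beta> * real (length v))"
    define P where "P = mu powr \<alpha> * mv powr \<alpha>"
    have mpos: "mu > 0" "mv > 0" using gibbs_pos[OF gm] u v by (auto simp: mu_def mv_def)
    have Epos: "E > 0" by (simp add: E_def)
    have Ppos: "P > 0" using mpos by (simp add: P_def)
    have "-\<beta> * real (length (u@v)) = (-\<beta> * real (length u)) + (-\<beta> * real (length v))"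
      by (simp add: algebra_simps)
    then have guv: "gcap K \<alpha> \<beta> \<nu> (u@v) = K * muv powr \<alpha> * E"
      unfolding gcap_def muv_def E_def by (simp only: exp_add)
    have gu: "gcap K \<alpha> \<beta> \<nu> u * gcap K \<alpha> \<beta> \<nu> v = K * K * P * E"
      by (simp add: gcap_def mu_def mv_def E_def P_def algebra_simps)
    have b1: "c1 * (mu*mv) \<le> muv" "muv \<le> c2 * (mu * mv)" using cb u v by (auto simp: mu_def mv_def muv_def)
    have p1: "(c1 * (mu*mv)) powr \<alpha> \<le> muv powr \<alpha>"
      by (rule powr_mono2) (use al c mpos b1 in auto)
    have muv0: "muv \<ge> 0" by (simp add: muv_def)
    have p2: "muv powr \<alpha> \<le> (c2 * (mu*mv)) powr \<alpha>"
      by (rule powr_mono2) (use al muv0 b1 in auto)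
    have e1: "(c1 * (mu*mv)) powr \<alpha> = c1 powr \<alpha> * P" by (simp add: powr_mult P_def)
    have e2: "(c2 * (mu*mv)) powr \<alpha> = c2 powr \<alpha> * P" by (simp add: powr_mult P_def)
    have "a * (K * K * P * E) = K * (c1 powr \<alpha> * P) * E" using K by (simp add: a_def field_simps)
    also have "\<dots> \<le> K * muv powr \<alpha> * E"
      using p1 e1 K Epos by (intro mult_right_mono mult_left_mono) auto
    finally show "a * (gcap K \<alpha> \<beta> \<nu> u * gcap K \<alpha> \<beta> \<nu> v) \<le> gcap K \<alpha> \<beta> \<nu> (u@v)"
      unfolding guv gu .
    have "K * muv powr \<alpha> * E \<le> K * (c2 powr \<alpha> * P) * E"
      using p2 e2 K Epos by (intro mult_right_mono mult_left_mono) auto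
    also have "\<dots> = (c2 powr \<alpha> / K) * (K * K * P * E)" using K by (simp add: field_simps)
    also have "\<dots> \<le> b * (K * K * P * E)"
      using K Ppos Epos by (intro mult_right_mono) (auto simp: b_def)
    finally show "gcap K \<alpha> \<beta> \<nu> (u@v) \<le> b * (gcap K \<alpha> \<beta> \<nu> u * gcap K \<alpha> \<beta> \<nu> v)"
      unfolding guv gu .
  qed
qed

lemma powr_sandwich:
  fixes a b x y q :: real
  assumes "0 < a" "a \<le> b" "0 < x" "a*x \<le> y" "y \<le> b*x"
  shows "min (a powr q) (b powr q) * x powr q \<le> y powr q \<and> y powr q \<le> max (a powr q) (b powr q) * x powr q"
proof -
  have ax: "a*x > 0" using assms by simp
  have y: "0 < y" using ax assms by linarith
  have e: "(a*x) powr q = a powr q * x powr q" "(b*x) powr q = b powr q * x powr q" by (auto simp: powr_mult)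
  have xq: "0 \<le> x powr q" by simp
  have l1: "min (a powr q) (b powr q) * x powr q \<le> a powr q * x powr q"
    using xq by (intro mult_right_mono) auto
  have l2: "min (a powr q) (b powr q) * x powr q \<le> b powr q * x powr q"
    using xq by (intro mult_right_mono) auto
  have u1: "a powr q * x powr q \<le> max (a powr q) (b powr q) * x powr q"
    using xq by (intro mult_right_mono) auto
  have u2: "b powr q * x powr q \<le> max (a powr q) (b powr q) * x powr q"
    using xq by (intro mult_right_mono) auto
  show ?thesis
  proof (cases "q \<ge> 0")
    case True
    have "(a*x) powr q \<le> y powr q" by (rule powr_mono2) (use True assms ax in auto)
    moreover have "y powr q \<le> (b*x) powr q" by (rule powr_mono2) (use True assms y in auto)
    ultimately show ?thesis using e l1 u2 by linarith
  next
    case False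
    have "(b*x) powr q \<le> y powr q" by (rule powr_mono2') (use False y assms in auto)
    moreover have "y powr q \<le> (a*x) powr q" by (rule powr_mono2') (use False ax assms in auto)
    ultimately show ?thesis using e l2 u1 by linarith
  qed
qed

definition Sg :: "real \<Rightarrow> real \<Rightarrow> real \<Rightarrow> 'd::finite seq measure \<Rightarrow> real \<Rightarrow> nat \<Rightarrow> real" where
  "Sg K \<alpha> \<beta> \<nu> q n = (\<Sum>w\<in>{w::'d letter list. length w = n}. gcap K \<alpha> \<beta> \<nu> w powr q)"

lemma Sg_pos:
  fixes \<psi> :: "'d::finite seq \<Rightarrow> real" and \<nu> :: "'d seq measure"
  assumes "gibbs_measure \<psi> \<nu>" "K > 0" "n \<ge> 1" shows "Sg K \<alpha> \<beta> \<nu> q n > 0"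
  unfolding Sg_def
proof (rule sum_pos)
  show "finite (W n :: 'd letter list set)" by (rule W_finite)
  show "(W n :: 'd letter list set) \<noteq> {}" by (rule W_nonempty)
  fix w :: "'d letter list" assume "w \<in> W n"
  then have "w \<noteq> []" using assms(3) by auto
  then have "gcap K \<alpha> \<beta> \<nu> w > 0" by (rule gcap_pos[OF assms(1,2)])
  then show "0 < gcap K \<alpha> \<beta> \<nu> w powr q" by simp
qed

lemma Sg_quasi:
  fixes \<psi> :: "'d::finite seq \<Rightarrow> real" and \<nu> :: "'d seq measure"
  assumes hp: "holder_potential \<psi>" and gm: "gibbs_measure \<psi> \<nu>" and K: "K > 0" and al: "\<alpha> \<ge> 0"
  shows "\<exists>lo hi. 0 < lo \<and> (\<forall>m n. m \<ge> 1 \<longrightarrow> n \<ge> 1 \<longrightarrow>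
     lo * (Sg K \<alpha> \<beta> \<nu> q m * Sg K \<alpha> \<beta> \<nu> q n) \<le> Sg K \<alpha> \<beta> \<nu> q (m+n) \<and>
     Sg K \<alpha> \<beta> \<nu> q (m+n) \<le> hi * (Sg K \<alpha> \<beta> \<nu> q m * Sg K \<alpha> \<beta> \<nu> q n))"
proof -
  obtain a b where ab: "0 < a" "a \<le> b" and qb: "\<forall>u v::'d letter list. u \<noteq> [] \<longrightarrow> v \<noteq> [] \<longrightarrow>
     a * (gcap K \<alpha> \<beta> \<nu> u * gcap K \<alpha> \<beta> \<nu> v) \<le> gcap K \<alpha> \<beta> \<nu> (u@v) \<and>
     gcap K \<alpha> \<beta> \<nu> (u@v) \<le> b * (gcap K \<alpha> \<beta> \<nu> u * gcap K \<alpha> \<beta> \<nu> v)"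
    using gcap_quasi[OF hp gm K al] by blast
  define g where "g = gcap K \<alpha> \<beta> \<nu>"
  define lo where "lo = min (a powr q) (b powr q)"
  define hi where "hi = max (a powr q) (b powr q)"
  have trm: "lo * (g u powr q * g v powr q) \<le> g (u@v) powr q \<and> g (u@v) powr q \<le> hi * (g u powr q * g v powr q)"
    if "u \<noteq> []" "v \<noteq> []" for u v :: "'d letter list"
  proof -
    have "g u > 0" "g v > 0" unfolding g_def using gcap_pos[OF gm K] that by auto
    then have x: "g u * g v > 0" by simp
    have "(g u * g v) powr q = g u powr q * g v powr q" by (simp add: powr_mult)
    then show ?thesis using powr_sandwich[OF ab(1) ab(2) x, of "g (u@v)" q] qb that
      unfolding lo_def hi_def g_def by auto
  qed
  show ?thesis
  proof (intro exI conjI allI impI)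
    show "0 < lo" using ab by (simp add: lo_def)
    fix m n :: nat assume m: "m \<ge> 1" and n: "n \<ge> 1"
    have eq: "Sg K \<alpha> \<beta> \<nu> q (m+n) = (\<Sum>u\<in>W m. \<Sum>v\<in>W n. g (u@v) powr q)"
      unfolding Sg_def g_def by (rule sum_W_split)
    have prod: "X * (Sg K \<alpha> \<beta> \<nu> q m * Sg K \<alpha> \<beta> \<nu> q n) = (\<Sum>u\<in>W m. \<Sum>v\<in>W n. X * (g u powr q * g v powr q))" for X
    proof -
      have "Sg K \<alpha> \<beta> \<nu> q m * Sg K \<alpha> \<beta> \<nu> q n = (\<Sum>u\<in>W m. \<Sum>v\<in>W n. g u powr q * g v powr q)"
        unfolding Sg_def g_def by (rule sum_product)
      then show ?thesis by (simp add: sum_distrib_left)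
    qed
    have ne: "u \<noteq> []" if "u \<in> W k" "k \<ge> 1" for u :: "'d letter list" and k using that by auto
    show "lo * (Sg K \<alpha> \<beta> \<nu> q m * Sg K \<alpha> \<beta> \<nu> q n) \<le> Sg K \<alpha> \<beta> \<nu> q (m+n)"
      unfolding eq prod
    proof (intro sum_mono)
      fix u v :: "'d letter list" assume "u \<in> W m" "v \<in> W n"
      then have "u \<noteq> []" "v \<noteq> []" using m n by auto
      from trm[OF this] show "lo * (g u powr q * g v powr q) \<le> g (u@v) powr q" by (rule conjunct1)
    qed
    show "Sg K \<alpha> \<beta> \<nu> q (m+n) \<le> hi * (Sg K \<alpha> \<beta> \<nu> q m * Sg K \<alpha> \<beta> \<nu> q n)"
      unfolding eq prod
    proof (intro sum_mono)
      fix u v :: "'d letter list" assume "u \<in> W m" "v \<in> W n"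
      then have "u \<noteq> []" "v \<noteq> []" using m n by auto
      from trm[OF this] show "g (u@v) powr q \<le> hi * (g u powr q * g v powr q)" by (rule conjunct2)
    qed
  qed
qed

lemma abs_between: "x \<le> y \<Longrightarrow> y \<le> z \<Longrightarrow> \<bar>y\<bar> \<le> \<bar>x\<bar> + \<bar>z\<bar>" for x y z :: real
  by arith

lemma tau_tendsto:
  fixes \<psi> :: "'d::finite seq \<Rightarrow> real" and \<nu> :: "'d seq measure"
  assumes hp: "holder_potential \<psi>" and gm: "gibbs_measure \<psi> \<nu>" and K: "K > 0" and al: "\<alpha> \<ge> 0"
  shows "(\<lambda>j. - log 2 (Sg K \<alpha> \<beta> \<nu> q j) / real j) \<longlonglongrightarrow> tau K \<alpha> \<beta> \<nu> q"
proof -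
  obtain lo hi where lo: "0 < lo" and lh: "\<forall>m n. m \<ge> 1 \<longrightarrow> n \<ge> 1 \<longrightarrow>
     lo * (Sg K \<alpha> \<beta> \<nu> q m * Sg K \<alpha> \<beta> \<nu> q n) \<le> Sg K \<alpha> \<beta> \<nu> q (m+n) \<and>
     Sg K \<alpha> \<beta> \<nu> q (m+n) \<le> hi * (Sg K \<alpha> \<beta> \<nu> q m * Sg K \<alpha> \<beta> \<nu> q n)"
    using Sg_quasi[OF hp gm K al] by blast
  define S where "S = Sg K \<alpha> \<beta> \<nu> q"
  define a where "a n = log 2 (S n)" for n
  have qa: "\<bar>a (m+n) - a m - a n\<bar> \<le> \<bar>log 2 lo\<bar> + \<bar>log 2 hi\<bar>" if m: "m \<ge> 1" and n: "n \<ge> 1" for m n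
  proof -
    have Sm: "S m > 0" and Sn: "S n > 0" and Smn: "S (m+n) > 0"
      unfolding S_def using Sg_pos[OF gm K] m n by auto
    have l1: "lo * (S m * S n) \<le> S (m+n)" and l2: "S (m+n) \<le> hi * (S m * S n)"
      using lh m n unfolding S_def by auto
    have SS: "S m * S n > 0" using Sm Sn by simp
    have hi: "hi > 0"
    proof (rule ccontr)
      assume "\<not> hi > 0"
      then have "hi * (S m * S n) \<le> 0" using SS by (intro mult_nonpos_nonneg) auto
      then show False using l2 Smn by linarith
    qed
    have A: "log 2 (lo * (S m * S n)) \<le> log 2 (S (m+n))"
      by (rule log_mono) (use lo SS l1 in auto)
    have B: "log 2 (lo * (S m * S n)) = log 2 lo + (log 2 (S m) + log 2 (S n))"
      using lo Sm Sn by (simp only: log_mult_pos mult_pos_pos)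
    have C: "log 2 (S (m+n)) \<le> log 2 (hi * (S m * S n))"
      by (rule log_mono) (use Smn l2 in auto)
    have D: "log 2 (hi * (S m * S n)) = log 2 hi + (log 2 (S m) + log 2 (S n))"
      using hi Sm Sn by (simp only: log_mult_pos mult_pos_pos)
    have E: "a (m+n) - a m - a n = log 2 (S (m+n)) - log 2 (S m) - log 2 (S n)" by (simp only: a_def)
    have "log 2 lo \<le> a (m+n) - a m - a n" using A B E by linarith
    moreover have "a (m+n) - a m - a n \<le> log 2 hi" using C D E by linarith
    ultimately show ?thesis by (rule abs_between)
  qed
  have "convergent (\<lambda>n. a n / real n)" by (rule quasi_add_conv[OF qa])
  then have "convergent (\<lambda>n. - (a n / real n))" by (rule iffD1[OF convergent_minus_iff])
  then have c: "convergent (\<lambda>j. - log 2 (Sg K \<alpha> \<beta> \<nu> q j) / real j)"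
    unfolding a_def S_def by simp
  then show ?thesis unfolding tau_def Sg_def[symmetric] by (simp add: convergent_LIMSEQ_iff)
qed




lemma holder_sum:
  fixes f :: "'a \<Rightarrow> real"
  assumes fin: "finite A" and ne: "A \<noteq> {}" and pos: "\<And>x. x \<in> A \<Longrightarrow> f x > 0"
    and l: "0 \<le> l" "l \<le> 1"
  shows "(\<Sum>x\<in>A. f x powr (l*p + (1-l)*r)) \<le> (\<Sum>x\<in>A. f x powr p) powr l * (\<Sum>x\<in>A. f x powr r) powr (1-l)"
proof -
  define X where "X = (\<Sum>x\<in>A. f x powr p)"
  define Y where "Y = (\<Sum>x\<in>A. f x powr r)"
  have fpos: "f x powr s > 0" if "x \<in> A" for x s
    using pos[OF that] by (metis powr_gt_zero less_irrefl)
  have X: "X > 0" unfolding X_def using fin ne fpos by (intro sum_pos) auto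
  have Y: "Y > 0" unfolding Y_def using fin ne fpos by (intro sum_pos) auto
  define c where "c = X powr l * Y powr (1-l)"
  have c: "c > 0" using X Y by (simp add: c_def)
  have each: "f x powr (l*p + (1-l)*r) \<le> c * (l * (f x powr p / X) + (1-l) * (f x powr r / Y))"
    if "x \<in> A" for x
  proof -
    have fx: "f x > 0" using pos that .
    have e0: "l*p + (1-l)*r = p*l + r*(1-l)" by simp
    have "f x powr (l*p + (1-l)*r) = (f x powr p) powr l * (f x powr r) powr (1-l)"
      by (simp only: e0 powr_add powr_powr)
    also have "\<dots> = c * ((f x powr p / X) powr l * (f x powr r / Y) powr (1-l))"
    proof -
      have "(f x powr p / X) powr l * (f x powr r / Y) powr (1-l)
          = (f x powr p) powr l * (f x powr r) powr (1-l) / c"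
        by (simp add: powr_divide c_def)
      then show ?thesis using c by simp
    qed
    also have "\<dots> \<le> c * (l * (f x powr p / X) + (1-l) * (f x powr r / Y))"
      by (intro mult_left_mono Youngs_inequality_0) (use l X Y fx c in auto)
    finally show ?thesis .
  qed
  have "(\<Sum>x\<in>A. f x powr (l*p + (1-l)*r)) \<le> (\<Sum>x\<in>A. c * (l * (f x powr p / X) + (1-l) * (f x powr r / Y)))"
    by (rule sum_mono) (rule each)
  also have "\<dots> = c * (\<Sum>x\<in>A. l * (f x powr p / X) + (1-l) * (f x powr r / Y))"
    by (simp only: sum_distrib_left)
  also have "(\<Sum>x\<in>A. l * (f x powr p / X) + (1-l) * (f x powr r / Y))
      = l * ((\<Sum>x\<in>A. f x powr p) / X) + (1-l) * ((\<Sum>x\<in>A. f x powr r) / Y)"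
    by (simp only: sum.distrib sum_distrib_left[symmetric] sum_divide_distrib[symmetric])
  also have "\<dots> = l * (X / X) + (1-l) * (Y / Y)" by (simp only: X_def[symmetric] Y_def[symmetric])
  also have "l * (X / X) + (1-l) * (Y / Y) = 1" using X Y by simp
  finally show ?thesis unfolding c_def X_def Y_def by simp
qed

lemma Tj_concave:
  fixes \<psi> :: "'d::finite seq \<Rightarrow> real" and \<nu> :: "'d seq measure"
  assumes gm: "gibbs_measure \<psi> \<nu>" and K: "K > 0" and j: "j \<ge> 1" and l: "0 \<le> l" "l \<le> 1"
  shows "l * (- log 2 (Sg K \<alpha> \<beta> \<nu> p j) / real j) + (1-l) * (- log 2 (Sg K \<alpha> \<beta> \<nu> r j) / real j)
     \<le> - log 2 (Sg K \<alpha> \<beta> \<nu> (l*p + (1-l)*r) j) / real j"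
proof -
  have pos: "Sg K \<alpha> \<beta> \<nu> q j > 0" for q using Sg_pos[OF gm K j] .
  have "Sg K \<alpha> \<beta> \<nu> (l*p + (1-l)*r) j \<le> Sg K \<alpha> \<beta> \<nu> p j powr l * Sg K \<alpha> \<beta> \<nu> r j powr (1-l)"
    unfolding Sg_def
  proof (rule holder_sum[OF W_finite W_nonempty _ l])
    fix w :: "'d letter list" assume "w \<in> W j"
    then have "w \<noteq> []" using j by auto
    then show "gcap K \<alpha> \<beta> \<nu> w > 0" by (rule gcap_pos[OF gm K])
  qed
  then have "log 2 (Sg K \<alpha> \<beta> \<nu> (l*p + (1-l)*r) j) \<le> log 2 (Sg K \<alpha> \<beta> \<nu> p j powr l * Sg K \<alpha> \<beta> \<nu> r j powr (1-l))"
    by (intro log_mono) (use pos in auto)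
  also have "\<dots> = l * log 2 (Sg K \<alpha> \<beta> \<nu> p j) + (1-l) * log 2 (Sg K \<alpha> \<beta> \<nu> r j)"
    using pos[of p] pos[of r] by (simp add: log_mult_pos log_powr)
  finally have L: "log 2 (Sg K \<alpha> \<beta> \<nu> (l*p + (1-l)*r) j) \<le> l * log 2 (Sg K \<alpha> \<beta> \<nu> p j) + (1-l) * log 2 (Sg K \<alpha> \<beta> \<nu> r j)" .
  have jp: "real j > 0" using j by simp
  have eq: "l * (- log 2 (Sg K \<alpha> \<beta> \<nu> p j) / real j) + (1-l) * (- log 2 (Sg K \<alpha> \<beta> \<nu> r j) / real j)
     = - (l * log 2 (Sg K \<alpha> \<beta> \<nu> p j) + (1-l) * log 2 (Sg K \<alpha> \<beta> \<nu> r j)) / real j"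
    by (simp add: add_divide_distrib diff_divide_distrib)
  show ?thesis unfolding eq using L jp by (intro divide_right_mono) auto
qed

lemma tau_concave:
  fixes \<psi> :: "'d::finite seq \<Rightarrow> real" and \<nu> :: "'d seq measure"
  assumes hp: "holder_potential \<psi>" and gm: "gibbs_measure \<psi> \<nu>" and K: "K > 0" and al: "\<alpha> \<ge> 0"
    and l: "0 \<le> l" "l \<le> 1"
  shows "l * tau K \<alpha> \<beta> \<nu> p + (1-l) * tau K \<alpha> \<beta> \<nu> r \<le> tau K \<alpha> \<beta> \<nu> (l*p + (1-l)*r)"
proof (rule tendsto_le[OF trivial_limit_sequentially])
  show "(\<lambda>j. - log 2 (Sg K \<alpha> \<beta> \<nu> (l*p + (1-l)*r) j) / real j) \<longlonglongrightarrow> tau K \<alpha> \<beta> \<nu> (l*p + (1-l)*r)"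
    by (rule tau_tendsto[OF hp gm K al])
  show "(\<lambda>j. l * (- log 2 (Sg K \<alpha> \<beta> \<nu> p j) / real j) + (1-l) * (- log 2 (Sg K \<alpha> \<beta> \<nu> r j) / real j))
      \<longlonglongrightarrow> l * tau K \<alpha> \<beta> \<nu> p + (1-l) * tau K \<alpha> \<beta> \<nu> r"
    by (intro tendsto_add tendsto_mult_left tau_tendsto[OF hp gm K al])
  show "\<forall>\<^sub>F j in sequentially. l * (- log 2 (Sg K \<alpha> \<beta> \<nu> p j) / real j) + (1-l) * (- log 2 (Sg K \<alpha> \<beta> \<nu> r j) / real j)
      \<le> - log 2 (Sg K \<alpha> \<beta> \<nu> (l*p + (1-l)*r) j) / real j"
    using Tj_concave[OF gm K _ l] unfolding eventually_sequentially by blast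
qed

lemma tau_mono:
  fixes \<psi> :: "'d::finite seq \<Rightarrow> real" and \<nu> :: "'d seq measure"
  assumes hp: "holder_potential \<psi>" and gm: "gibbs_measure \<psi> \<nu>" and K: "K > 0" and al: "\<alpha> \<ge> 0"
    and be: "\<beta> \<ge> 0" and qq: "q \<le> q'"
  shows "tau K \<alpha> \<beta> \<nu> q \<le> tau K \<alpha> \<beta> \<nu> q'"
proof (rule tendsto_le[OF trivial_limit_sequentially])
  define c where "c = (q' - q) * log 2 K"
  show "(\<lambda>j. - log 2 (Sg K \<alpha> \<beta> \<nu> q' j) / real j + c / real j) \<longlonglongrightarrow> tau K \<alpha> \<beta> \<nu> q'"
    using tendsto_add[OF tau_tendsto[OF hp gm K al] lim_const_over_n[of c]] by simp
  show "(\<lambda>j. - log 2 (Sg K \<alpha> \<beta> \<nu> q j) / real j) \<longlonglongrightarrow> tau K \<alpha> \<beta> \<nu> q"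
    by (rule tau_tendsto[OF hp gm K al])
  show "\<forall>\<^sub>F j in sequentially. - log 2 (Sg K \<alpha> \<beta> \<nu> q j) / real j \<le> - log 2 (Sg K \<alpha> \<beta> \<nu> q' j) / real j + c / real j"
    unfolding eventually_sequentially
  proof (intro exI allI impI)
    fix j :: nat assume j: "j \<ge> 1"
    have pos: "Sg K \<alpha> \<beta> \<nu> s j > 0" for s using Sg_pos[OF gm K j] .
    have "Sg K \<alpha> \<beta> \<nu> q' j \<le> (\<Sum>w\<in>W j. K powr (q' - q) * gcap K \<alpha> \<beta> \<nu> w powr q)"
      unfolding Sg_def
    proof (rule sum_mono)
      fix w :: "'d letter list" assume "w \<in> W j"
      then have "w \<noteq> []" using j by auto
      then have g: "gcap K \<alpha> \<beta> \<nu> w > 0" by (rule gcap_pos[OF gm K])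
      have gK: "gcap K \<alpha> \<beta> \<nu> w \<le> K" by (rule gcap_le[OF gm K al be])
      have "gcap K \<alpha> \<beta> \<nu> w powr q' = gcap K \<alpha> \<beta> \<nu> w powr (q' - q) * gcap K \<alpha> \<beta> \<nu> w powr q"
        by (simp flip: powr_add)
      also have "\<dots> \<le> K powr (q' - q) * gcap K \<alpha> \<beta> \<nu> w powr q"
        by (intro mult_right_mono powr_mono2) (use qq g gK in auto)
      finally show "gcap K \<alpha> \<beta> \<nu> w powr q' \<le> K powr (q' - q) * gcap K \<alpha> \<beta> \<nu> w powr q" .
    qed
    also have "\<dots> = K powr (q' - q) * Sg K \<alpha> \<beta> \<nu> q j" unfolding Sg_def by (simp add: sum_distrib_left)
    finally have "log 2 (Sg K \<alpha> \<beta> \<nu> q' j) \<le> log 2 (K powr (q' - q) * Sg K \<alpha> \<beta> \<nu> q j)"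
      by (intro log_mono) (use pos in auto)
    also have "\<dots> = c + log 2 (Sg K \<alpha> \<beta> \<nu> q j)"
      using pos[of q] K by (simp add: log_mult_pos log_powr c_def)
    finally have L: "log 2 (Sg K \<alpha> \<beta> \<nu> q' j) \<le> c + log 2 (Sg K \<alpha> \<beta> \<nu> q j)" .
    have jp: "real j > 0" using j by simp
    have eq: "- log 2 (Sg K \<alpha> \<beta> \<nu> q' j) / real j + c / real j = (- log 2 (Sg K \<alpha> \<beta> \<nu> q' j) + c) / real j"
      by (rule add_divide_distrib[symmetric])
    show "- log 2 (Sg K \<alpha> \<beta> \<nu> q j) / real j \<le> - log 2 (Sg K \<alpha> \<beta> \<nu> q' j) / real j + c / real j"
      unfolding eq using L jp by (intro divide_right_mono) auto
  qed
qed

lemma card_W: "card (W j :: 'd::finite letter list set) = (2 ^ CARD('d)) ^ j"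
proof -
  have "card (W j :: 'd letter list set) = card {xs :: 'd letter list. set xs \<subseteq> UNIV \<and> length xs = j}" by simp
  also have "\<dots> = CARD('d letter) ^ j" by (rule card_lists_length_eq) simp
  also have "CARD('d letter) = 2 ^ CARD('d)" by (simp add: card_fun)
  finally show ?thesis .
qed

lemma tau_zero:
  fixes \<psi> :: "'d::finite seq \<Rightarrow> real" and \<nu> :: "'d seq measure"
  assumes hp: "holder_potential \<psi>" and gm: "gibbs_measure \<psi> \<nu>" and K: "K > 0" and al: "\<alpha> \<ge> 0"
  shows "tau K \<alpha> \<beta> \<nu> 0 = - real CARD('d)"
proof -
  have ev: "\<forall>\<^sub>F j in sequentially. - real CARD('d) = - log 2 (Sg K \<alpha> \<beta> \<nu> 0 j) / real j"
    unfolding eventually_sequentially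
  proof (intro exI allI impI)
    fix j :: nat assume j: "j \<ge> 1"
    have "Sg K \<alpha> \<beta> \<nu> 0 j = (\<Sum>w\<in>(W j :: 'd letter list set). (1::real))"
      unfolding Sg_def
    proof (rule sum.cong)
      fix w :: "'d letter list" assume "w \<in> W j"
      then have "w \<noteq> []" using j by auto
      then have g: "gcap K \<alpha> \<beta> \<nu> w > 0" by (rule gcap_pos[OF gm K])
      then show "gcap K \<alpha> \<beta> \<nu> w powr 0 = 1" by simp
    qed simp
    also have "\<dots> = real ((2 ^ CARD('d)) ^ j)" using card_W[where 'd='d, of j] by simp
    also have "\<dots> = 2 ^ (CARD('d) * j)" by (simp add: power_mult)
    finally have "log 2 (Sg K \<alpha> \<beta> \<nu> 0 j) = real (CARD('d) * j)" by simp
    then show "- real CARD('d) = - log 2 (Sg K \<alpha> \<beta> \<nu> 0 j) / real j" using j by simp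
  qed
  have "(\<lambda>j. - log 2 (Sg K \<alpha> \<beta> \<nu> 0 j) / real j) \<longlonglongrightarrow> - real CARD('d)"
    by (rule Lim_transform_eventually[OF tendsto_const ev])
  moreover have "(\<lambda>j. - log 2 (Sg K \<alpha> \<beta> \<nu> 0 j) / real j) \<longlonglongrightarrow> tau K \<alpha> \<beta> \<nu> 0"
    by (rule tau_tendsto[OF hp gm K al])
  ultimately show ?thesis using LIMSEQ_unique by metis
qed

lemma concave_supergrad:
  fixes f :: "real \<Rightarrow> real"
  assumes conc: "\<And>x y l. 0 \<le> l \<Longrightarrow> l \<le> 1 \<Longrightarrow> l * f x + (1-l) * f y \<le> f (l*x + (1-l)*y)"
    and mono: "\<And>x y. x \<le> y \<Longrightarrow> f x \<le> f y"
  shows "\<exists>H\<ge>0. \<forall>q. f q \<le> f 0 + H * q"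
proof -
  have slope: "(f p - f 0)/p \<le> (f q - f 0)/q" if q: "q < 0" and p: "0 < p" for p q
  proof -
    define l where "l = p/(p-q)"
    have pq: "p - q > 0" using p q by simp
    have l: "0 \<le> l" "l \<le> 1" using p q pq by (auto simp: l_def divide_le_eq)
    have lpq: "l * (p-q) = p" using pq by (simp add: l_def)
    have z: "l*q + (1-l)*p = 0"
    proof -
      have "l*q + (1-l)*p = p - l*(p-q)" by (simp add: algebra_simps)
      then show ?thesis using lpq by simp
    qed
    have "l * f q + (1-l) * f p \<le> f 0" using conc[OF l, of q p] z by simp
    then have "(p-q) * (l * f q + (1-l) * f p) \<le> (p-q) * f 0" using pq by (intro mult_left_mono) auto
    moreover have "(p-q) * (l * f q + (1-l) * f p) = p * f q - q * f p"
    proof -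
      have "(p-q) * (l * f q + (1-l) * f p) = (l * (p-q)) * f q + ((p-q) - l*(p-q)) * f p"
        by (simp add: algebra_simps)
      also have "\<dots> = p * f q + ((p-q) - p) * f p" by (simp only: lpq)
      also have "\<dots> = p * f q - q * f p" by (simp add: algebra_simps)
      finally show ?thesis .
    qed
    ultimately have "p * f q - q * f p \<le> (p-q) * f 0" by simp
    then have A: "p * (f q - f 0) \<le> q * (f p - f 0)" by (simp add: algebra_simps)
    have pqn: "p * q < 0" using p q by (simp add: mult_pos_neg)
    have "(q * (f p - f 0)) / (p*q) \<le> (p * (f q - f 0)) / (p*q)"
      using A pqn by (intro divide_right_mono_neg) auto
    moreover have "(p * (f q - f 0)) / (p*q) = (f q - f 0)/q" using p by simp
    moreover have "(q * (f p - f 0)) / (p*q) = (f p - f 0)/p" using q by simp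
    ultimately show ?thesis by simp
  qed
  define H where "H = (SUP p\<in>{0<..}. (f p - f 0)/p)"
  have bdd: "bdd_above ((\<lambda>p. (f p - f 0)/p) ` {0<..})"
  proof (rule bdd_aboveI2[where M="(f (-1) - f 0)/(-1)"])
    fix x :: real assume "x \<in> {0<..}"
    then show "(f x - f 0)/x \<le> (f (-1) - f 0)/(-1)" by (intro slope) auto
  qed
  have up: "(f p - f 0)/p \<le> H" if "p > 0" for p
    unfolding H_def by (rule cSUP_upper[OF _ bdd]) (use that in auto)
  have lo: "H \<le> (f q - f 0)/q" if "q < 0" for q
    unfolding H_def by (rule cSUP_least) (use slope that in auto)
  have H0: "H \<ge> 0"
  proof -
    have "0 \<le> (f 1 - f 0)/1" using mono[of 0 1] by simp
    also have "\<dots> \<le> H" by (rule up) simp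
    finally show ?thesis .
  qed
  show ?thesis
  proof (intro exI conjI allI)
    show "H \<ge> 0" by (rule H0)
    fix q :: real
    consider "q > 0" | "q = 0" | "q < 0" by linarith
    then show "f q \<le> f 0 + H * q"
    proof cases
      case 1
      then have "f q - f 0 \<le> H * q" using up[OF 1] by (simp add: pos_divide_le_eq)
      then show ?thesis by simp
    next
      case 2 then show ?thesis by simp
    next
      case 3
      then have "f q - f 0 \<le> H * q" using lo[OF 3] by (simp add: neg_le_divide_eq)
      then show ?thesis by simp
    qed
  qed
qed




lemma Hl_facts:
  fixes \<psi> :: "'d::finite seq \<Rightarrow> real" and \<nu> :: "'d seq measure"
  assumes hp: "holder_potential \<psi>" and gm: "gibbs_measure \<psi> \<nu>" and K: "K > 0" and al: "\<alpha> \<ge> 0"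
    and be: "\<beta> \<ge> 0" and et: "0 \<le> \<eta>"
  shows "0 \<le> H_l K \<alpha> \<beta> \<nu> \<eta>"
    and "\<forall>H. 0 \<le> H \<and> H < H_l K \<alpha> \<beta> \<nu> \<eta> \<longrightarrow> (\<exists>q\<ge>0. q * H - tau K \<alpha> \<beta> \<nu> q < real CARD('d) * (1 - \<eta>))"
proof -
  define f where "f = tau K \<alpha> \<beta> \<nu>"
  have conc: "\<And>x y l. 0 \<le> l \<Longrightarrow> l \<le> 1 \<Longrightarrow> l * f x + (1-l) * f y \<le> f (l*x + (1-l)*y)"
    unfolding f_def by (rule tau_concave[OF hp gm K al])
  have mono: "\<And>x y. x \<le> y \<Longrightarrow> f x \<le> f y"
    unfolding f_def by (rule tau_mono[OF hp gm K al be])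
  obtain H0 where H0: "H0 \<ge> 0" and H0b: "\<forall>q. f q \<le> f 0 + H0 * q"
    using concave_supergrad[OF conc mono] by blast
  have f0: "f 0 = - real CARD('d)" unfolding f_def by (rule tau_zero[OF hp gm K al])
  define d where "d = real CARD('d)"
  have d0: "d \<ge> 0" by (simp add: d_def)
  define S where "S = {H. H \<ge> 0 \<and> Dspec K \<alpha> \<beta> \<nu> H \<ge> ereal (d * (1 - \<eta>))}"
  have HlS: "H_l K \<alpha> \<beta> \<nu> \<eta> = Inf S" unfolding H_l_def S_def d_def by simp
  have Dspec_f: "Dspec K \<alpha> \<beta> \<nu> H = (INF q. ereal (q * H - f q))" for H
    unfolding Dspec_def f_def by simp
  have H0S: "H0 \<in> S"
    unfolding S_def
  proof (intro CollectI conjI H0)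
    show "ereal (d * (1 - \<eta>)) \<le> Dspec K \<alpha> \<beta> \<nu> H0"
      unfolding Dspec_f
    proof (rule INF_greatest)
      fix q :: real
      have "d * (1 - \<eta>) \<le> d" using d0 et by (simp add: mult_left_le)
      also have "d \<le> q * H0 - f q" using H0b[rule_format, of q] f0 unfolding d_def by (simp add: algebra_simps)
      finally show "ereal (d * (1 - \<eta>)) \<le> ereal (q * H0 - f q)" by simp
    qed
  qed
  have bdd: "bdd_below S" unfolding bdd_below_def S_def by auto
  have Sne: "S \<noteq> {}" using H0S by blast
  show "0 \<le> H_l K \<alpha> \<beta> \<nu> \<eta>" unfolding HlS by (rule cInf_greatest[OF Sne]) (auto simp: S_def)
  show "\<forall>H. 0 \<le> H \<and> H < H_l K \<alpha> \<beta> \<nu> \<eta> \<longrightarrow> (\<exists>q\<ge>0. q * H - tau K \<alpha> \<beta> \<nu> q < real CARD('d) * (1 - \<eta>))"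
  proof (intro allI impI, elim conjE)
    fix H assume H: "0 \<le> H" "H < H_l K \<alpha> \<beta> \<nu> \<eta>"
    have notS: "H \<notin> S"
    proof
      assume "H \<in> S"
      then have "Inf S \<le> H" by (rule cInf_lower[OF _ bdd])
      then show False using H HlS by simp
    qed
    then have "\<not> ereal (d * (1 - \<eta>)) \<le> Dspec K \<alpha> \<beta> \<nu> H" using H by (simp add: S_def)
    then have "(INF q. ereal (q * H - f q)) < ereal (d * (1 - \<eta>))" unfolding Dspec_f by simp
    then obtain q where q: "ereal (q * H - f q) < ereal (d * (1 - \<eta>))"
      unfolding INF_less_iff by blast
    then have q': "q * H - f q < d * (1 - \<eta>)" by simp
    show "\<exists>q\<ge>0. q * H - tau K \<alpha> \<beta> \<nu> q < real CARD('d) * (1 - \<eta>)"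
    proof (cases "q \<ge> 0")
      case True
      then show ?thesis using q' unfolding f_def d_def by blast
    next
      case False
      have "Inf S \<le> H0" by (rule cInf_lower[OF H0S bdd])
      then have HH0: "H \<le> H0" using H HlS by simp
      have "q * H0 \<le> q * H" using False HH0 by (intro mult_left_mono_neg) auto
      have "Dspec K \<alpha> \<beta> \<nu> H0 \<le> ereal (q * H0 - f q)" unfolding Dspec_f by (rule INF_lower) simp
      also have "\<dots> \<le> ereal (q * H - f q)" using \<open>q * H0 \<le> q * H\<close> by simp
      also have "\<dots> < ereal (d * (1 - \<eta>))" by (rule q)
      finally have "Dspec K \<alpha> \<beta> \<nu> H0 < ereal (d * (1 - \<eta>))" .
      moreover have "ereal (d * (1 - \<eta>)) \<le> Dspec K \<alpha> \<beta> \<nu> H0" using H0S by (simp add: S_def)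
      ultimately show ?thesis by simp
    qed
  qed
qed

lemma nbrs_finite: "finite (nbrs (w :: 'd::finite letter list))"
proof -
  have "nbrs w \<subseteq> W (length w)" unfolding nbrs_def by auto
  then show ?thesis using W_finite finite_subset by blast
qed

lemma nbrs_self: "w \<in> nbrs w" unfolding nbrs_def by simp

lemma nbrs_length: "u \<in> nbrs w \<Longrightarrow> length u = length w" unfolding nbrs_def by simp

lemma Mtilde_bound:
  fixes w :: "'d::finite letter list"
  assumes "\<And>u. length u = length w \<Longrightarrow> 0 < Msamp K \<alpha> \<beta> \<nu> p \<omega> u \<and> Msamp K \<alpha> \<beta> \<nu> p \<omega> u \<le> b"
  shows "0 < Mtilde K \<alpha> \<beta> \<nu> p \<omega> w \<and> Mtilde K \<alpha> \<beta> \<nu> p \<omega> w \<le> b"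
proof -
  have "Max ((\<lambda>u. Msamp K \<alpha> \<beta> \<nu> p \<omega> u) ` nbrs w) \<in> (\<lambda>u. Msamp K \<alpha> \<beta> \<nu> p \<omega> u) ` nbrs w"
    using nbrs_finite nbrs_self by (intro Max_in) auto
  then obtain u where "u \<in> nbrs w" and "Mtilde K \<alpha> \<beta> \<nu> p \<omega> w = Msamp K \<alpha> \<beta> \<nu> p \<omega> u"
    unfolding Mtilde_def by auto
  then show ?thesis using assms nbrs_length by metis
qed

lemma Msamp_bound:
  fixes \<psi> :: "'d::finite seq \<Rightarrow> real" and w :: "'d letter list"
  assumes gm: "gibbs_measure \<psi> \<nu>" and K: "K > 0" and al: "\<alpha> \<ge> 0" and be: "\<beta> \<ge> 0"
    and ne: "\<exists>v. v \<noteq> [] \<and> p (w@v) \<omega>"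
    and bd: "\<And>v. v \<noteq> [] \<Longrightarrow> p (w@v) \<omega> \<Longrightarrow> gcap K \<alpha> \<beta> \<nu> (w@v) \<le> b"
  shows "0 < Msamp K \<alpha> \<beta> \<nu> p \<omega> w \<and> Msamp K \<alpha> \<beta> \<nu> p \<omega> w \<le> b"
proof -
  define A where "A = {gcap K \<alpha> \<beta> \<nu> (w @ v) | v. v \<noteq> [] \<and> p (w @ v) \<omega>}"
  obtain v where v: "v \<noteq> []" "p (w@v) \<omega>" using ne by blast
  have Ane: "A \<noteq> {}" using v unfolding A_def by blast
  have bddA: "bdd_above A" unfolding A_def using gcap_le[OF gm K al be]
    by (intro bdd_aboveI[where M=K]) auto
  have "gcap K \<alpha> \<beta> \<nu> (w@v) \<in> A" using v unfolding A_def by blast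
  then have "gcap K \<alpha> \<beta> \<nu> (w@v) \<le> Sup A" by (rule cSup_upper[OF _ bddA])
  moreover have "gcap K \<alpha> \<beta> \<nu> (w@v) > 0" using v by (intro gcap_pos[OF gm K]) simp
  moreover have "Sup A \<le> b" using Ane by (rule cSup_least) (use bd in \<open>auto simp: A_def\<close>)
  ultimately show ?thesis unfolding Msamp_def A_def[symmetric] by simp
qed




context
  fixes \<Omega> :: "'a measure" and \<eta> :: real and p :: "'d::finite letter list \<Rightarrow> 'a \<Rightarrow> bool"
  assumes samp: "sampling \<Omega> \<eta> p" and et0: "0 < \<eta>" and et1: "\<eta> < 1"
begin

lemma ps: "prob_space \<Omega>" using samp by (simp add: sampling_def)

lemma p_meas: "w \<noteq> [] \<Longrightarrow> {\<omega>\<in>space \<Omega>. p w \<omega>} \<in> sets \<Omega>"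
proof -
  interpret prob_space \<Omega> by (rule ps)
  assume w: "w \<noteq> []"
  have "indep_vars (\<lambda>_. count_space UNIV) p {w. w \<noteq> []}" using samp by (simp add: sampling_def)
  then have "random_variable (count_space UNIV) (p w)" using w unfolding indep_vars_def2 by auto
  then have "p w -` {True} \<inter> space \<Omega> \<in> sets \<Omega>" by (rule measurable_sets) simp
  moreover have "p w -` {True} \<inter> space \<Omega> = {\<omega>\<in>space \<Omega>. p w \<omega>}" by auto
  ultimately show ?thesis by simp
qed

lemma np_meas: "w \<noteq> [] \<Longrightarrow> {\<omega>\<in>space \<Omega>. \<not> p w \<omega>} \<in> sets \<Omega>"
proof -
  assume w: "w \<noteq> []"
  have "{\<omega>\<in>space \<Omega>. \<not> p w \<omega>} = space \<Omega> - {\<omega>\<in>space \<Omega>. p w \<omega>}" by auto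
  then show ?thesis using p_meas[OF w] by simp
qed

lemma p_prob: "w \<noteq> [] \<Longrightarrow> measure \<Omega> {\<omega>\<in>space \<Omega>. p w \<omega>} = 2 powr (- real CARD('d) * (1 - \<eta>) * real (length w))"
  using samp by (simp add: sampling_def)

lemma np_prob: "w \<noteq> [] \<Longrightarrow> measure \<Omega> {\<omega>\<in>space \<Omega>. \<not> p w \<omega>} = 1 - 2 powr (- real CARD('d) * (1 - \<eta>) * real (length w))"
proof -
  interpret prob_space \<Omega> by (rule ps)
  assume w: "w \<noteq> []"
  have "{\<omega>\<in>space \<Omega>. \<not> p w \<omega>} = space \<Omega> - {\<omega>\<in>space \<Omega>. p w \<omega>}" by auto
  then show ?thesis using prob_compl[OF p_meas[OF w]] p_prob[OF w] by simp
qed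

lemma np_indep:
  assumes J: "finite J" "J \<noteq> {}" "\<And>u. u \<in> J \<Longrightarrow> u \<noteq> []"
  shows "measure \<Omega> (\<Inter>u\<in>J. {\<omega>\<in>space \<Omega>. \<not> p u \<omega>}) = (\<Prod>u\<in>J. measure \<Omega> {\<omega>\<in>space \<Omega>. \<not> p u \<omega>})"
proof -
  interpret prob_space \<Omega> by (rule ps)
  have "indep_vars (\<lambda>_. count_space UNIV) p {w. w \<noteq> []}" using samp by (simp add: sampling_def)
  then have ind: "indep_sets (\<lambda>i. {p i -` A \<inter> space \<Omega> | A. A \<in> sets (count_space UNIV)}) {w. w \<noteq> []}"
    unfolding indep_vars_def2 by blast
  have eq: "p u -` {False} \<inter> space \<Omega> = {\<omega>\<in>space \<Omega>. \<not> p u \<omega>}" for u by auto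
  have "prob (\<Inter>u\<in>J. p u -` {False} \<inter> space \<Omega>) = (\<Prod>u\<in>J. prob (p u -` {False} \<inter> space \<Omega>))"
    by (rule indep_setsD[OF ind]) (use J in auto)
  then show ?thesis unfolding eq .
qed

lemma exp_bound: "0 < x \<Longrightarrow> x \<le> 1 \<Longrightarrow> M > 0 \<Longrightarrow> (1 - x) ^ M \<le> 1 / (x * real M)" for x :: real
proof -
  assume x: "0 < x" "x \<le> 1" and M: "M > 0"
  show ?thesis
  proof (cases "M = 0")
    case True then show ?thesis using M by simp
  next
    case False
    have "(1 - x) ^ M \<le> exp (-x) ^ M"
      by (rule power_mono) (use x exp_ge_add_one_self[of "-x"] in auto)
    also have "\<dots> = exp (- (x * real M))" by (simp add: exp_of_nat_mult[symmetric] algebra_simps)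
    also have "\<dots> = 1 / exp (x * real M)" by (simp add: exp_minus field_simps)
    also have "\<dots> \<le> 1 / (x * real M)"
    proof -
      have pos: "0 < x * real M" using x False by simp
      have "x * real M \<le> exp (x * real M)" using exp_ge_add_one_self[of "x * real M"] by linarith
      then show ?thesis using pos by (intro divide_left_mono) auto
    qed
    finally show ?thesis .
  qed
qed

lemma AE_nonempty: "AE \<omega> in \<Omega>. \<forall>w. \<exists>v. v \<noteq> [] \<and> p (w@v) \<omega>"
proof -
  interpret prob_space \<Omega> by (rule ps)
  have one: "AE \<omega> in \<Omega>. \<exists>v. v \<noteq> [] \<and> p (w@v) \<omega>" for w
  proof -
    define j where "j = length w"
    define d where "d = real CARD('d)"
    have d1: "d \<ge> 1" unfolding d_def by (simp add: Suc_le_eq)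
    define U where "U n = (\<lambda>v. w@v) ` (W (Suc n) :: 'd letter list set)" for n
    have Ufin: "finite (U n)" for n unfolding U_def using W_finite by blast
    have Une: "U n \<noteq> {}" for n unfolding U_def using W_nonempty by blast
    have Unn: "u \<in> U n \<Longrightarrow> u \<noteq> []" for u n unfolding U_def by auto
    have Ulen: "u \<in> U n \<Longrightarrow> length u = j + Suc n" for u n unfolding U_def j_def by auto
    have Ucard: "card (U n) = (2 ^ CARD('d)) ^ Suc n" for n
    proof -
      have "inj_on (\<lambda>v. w@v) (W (Suc n) :: 'd letter list set)" by (auto simp: inj_on_def)
      then have "card (U n) = card (W (Suc n) :: 'd letter list set)" unfolding U_def by (rule card_image)
      then show ?thesis by (simp add: card_W)
    qed
    define E where "E n = {\<omega>\<in>space \<Omega>. \<forall>u\<in>U n. \<not> p u \<omega>}" for n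
    define N where "N = {\<omega>\<in>space \<Omega>. \<forall>n. \<forall>u\<in>U n. \<not> p u \<omega>}"
    have Emeas: "E n \<in> sets \<Omega>" for n
      unfolding E_def by (rule sets.sets_Collect_finite_All) (use np_meas Unn Ufin in auto)
    have Nmeas: "N \<in> sets \<Omega>"
      unfolding N_def by (rule sets.sets_Collect_countable_All) (use Emeas in \<open>simp add: E_def\<close>)
    have NE: "N \<subseteq> E n" for n unfolding N_def E_def by auto
    define c where "c = d * (1 - \<eta>)"
    have c0: "c \<ge> 0" using d1 et1 by (simp add: c_def)
    define \<pi> where "\<pi> n = 2 powr (- c * real (j + Suc n))" for n
    have pi_pos: "0 < \<pi> n" for n by (simp add: \<pi>_def)
    have pi_le: "\<pi> n \<le> 1" for n
    proof -
      have "2 powr (- c * real (j + Suc n)) \<le> 2 powr 0"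
        by (rule powr_mono) (use c0 in auto)
      then show ?thesis by (simp add: \<pi>_def)
    qed
    have Eprob: "prob (E n) = (1 - \<pi> n) ^ card (U n)" for n
    proof -
      have "E n = (\<Inter>u\<in>U n. {\<omega>\<in>space \<Omega>. \<not> p u \<omega>})" unfolding E_def using Une[of n] by auto
      then have "prob (E n) = (\<Prod>u\<in>U n. prob {\<omega>\<in>space \<Omega>. \<not> p u \<omega>})"
        using np_indep[OF Ufin Une] Unn by simp
      also have "\<dots> = (\<Prod>u\<in>U n. 1 - \<pi> n)"
      proof (rule prod.cong)
        fix u assume u: "u \<in> U n"
        show "prob {\<omega>\<in>space \<Omega>. \<not> p u \<omega>} = 1 - \<pi> n"
          using np_prob[OF Unn[OF u]] Ulen[OF u] by (simp add: \<pi>_def c_def d_def)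
      qed simp
      finally show ?thesis by simp
    qed
    have key: "\<pi> n * real (card (U n)) = 2 powr (d * \<eta> * real (Suc n) - c * real j)" for n
    proof -
      have "real (card (U n)) = (2::real) ^ (CARD('d) * Suc n)" unfolding Ucard by (simp only: of_nat_power of_nat_numeral power_mult)
      also have "\<dots> = 2 powr real (CARD('d) * Suc n)" by (rule powr_realpow[symmetric]) simp
      also have "real (CARD('d) * Suc n) = d * real (Suc n)" by (simp add: d_def algebra_simps)
      finally have "real (card (U n)) = 2 powr (d * real (Suc n))" .
      then have "\<pi> n * real (card (U n)) = 2 powr (- c * real (j + Suc n)) * 2 powr (d * real (Suc n))"
        by (simp only: \<pi>_def)
      also have "\<dots> = 2 powr (- c * real (j + Suc n) + d * real (Suc n))"
        by (rule powr_add[symmetric])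
      also have "- c * real (j + Suc n) + d * real (Suc n) = d * \<eta> * real (Suc n) - c * real j"
        by (simp add: c_def algebra_simps)
      finally show ?thesis .
    qed
    have bnd: "prob N \<le> 1 / 2 powr (d * \<eta> * real (Suc n) - c * real j)" for n
    proof -
      have "prob N \<le> prob (E n)" by (rule finite_measure_mono[OF NE Emeas])
      also have "\<dots> \<le> 1 / (\<pi> n * real (card (U n)))" unfolding Eprob
        by (rule exp_bound[OF pi_pos pi_le]) (use Ufin Une in \<open>simp add: card_gt_0_iff\<close>)
      finally show ?thesis unfolding key .
    qed
    have "prob N = 0"
    proof (rule ccontr)
      assume "prob N \<noteq> 0"
      then have eps: "prob N > 0" using measure_nonneg[of \<Omega> N] by linarith
      obtain n :: nat where n: "(log 2 (2 / prob N) + c * real j) / (d * \<eta>) < real n"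
        using reals_Archimedean2 by blast
      have dpos: "d * \<eta> > 0" using d1 et0 by simp
      have "log 2 (2 / prob N) + c * real j < d * \<eta> * real n"
        using n dpos by (simp add: divide_less_eq mult.commute)
      also have "\<dots> \<le> d * \<eta> * real (Suc n)" using dpos by (intro mult_left_mono) auto
      finally have "log 2 (2 / prob N) \<le> d * \<eta> * real (Suc n) - c * real j" by simp
      then have "2 powr (log 2 (2 / prob N)) \<le> 2 powr (d * \<eta> * real (Suc n) - c * real j)"
        by (rule powr_mono) simp
      then have "2 / prob N \<le> 2 powr (d * \<eta> * real (Suc n) - c * real j)" using eps by simp
      then have "1 / 2 powr (d * \<eta> * real (Suc n) - c * real j) \<le> prob N / 2"
        using eps by (simp add: divide_le_eq le_divide_eq mult.commute)
      then show False using bnd[of n] eps by linarith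
    qed
    then have "N \<in> null_sets \<Omega>" using Nmeas by (simp add: null_sets_def emeasure_eq_measure)
    moreover have "{\<omega>\<in>space \<Omega>. \<not> (\<exists>v. v \<noteq> [] \<and> p (w@v) \<omega>)} \<subseteq> N"
    proof
      fix \<omega> assume a: "\<omega> \<in> {\<omega>\<in>space \<Omega>. \<not> (\<exists>v. v \<noteq> [] \<and> p (w@v) \<omega>)}"
      have "\<not> p u \<omega>" if "u \<in> U n" for u n
      proof -
        from that have "u \<in> (\<lambda>v. w@v) ` (W (Suc n) :: 'd letter list set)" by (simp only: U_def)
        then obtain v :: "'d letter list" where "v \<in> W (Suc n)" "u = w@v" by blast
        then have "v \<noteq> []" "u = w@v" by auto
        then show ?thesis using a by blast
      qed
      then show "\<omega> \<in> N" using a unfolding N_def by blast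
    qed
    ultimately show ?thesis by (rule AE_I')
  qed
  then show ?thesis by (subst AE_all_countable) blast
qed


lemma AE_bad_finite:
  fixes \<psi> :: "'d seq \<Rightarrow> real" and \<nu> :: "'d seq measure"
  assumes hp: "holder_potential \<psi>" and gm: "gibbs_measure \<psi> \<nu>" and K: "K > 0" and al: "\<alpha> \<ge> 0"
    and H: "H \<ge> 0" and q: "q \<ge> 0" and qt: "q * H - tau K \<alpha> \<beta> \<nu> q < real CARD('d) * (1 - \<eta>)"
  shows "AE \<omega> in \<Omega>. \<exists>N. \<forall>n\<ge>N. \<forall>u::'d letter list. length u = n \<longrightarrow> u \<noteq> [] \<longrightarrow> p u \<omega> \<longrightarrow>
           gcap K \<alpha> \<beta> \<nu> u \<le> 2 powr (- (real n - 1) * H)"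
proof -
  interpret prob_space \<Omega> by (rule ps)
  define d where "d = real CARD('d)"
  define \<tau> where "\<tau> = tau K \<alpha> \<beta> \<nu> q"
  define \<delta> where "\<delta> = (d * (1 - \<eta>) - (q * H - \<tau>)) / 2"
  have \<delta>: "\<delta> > 0" using qt by (simp add: \<delta>_def d_def \<tau>_def)
  have qt': "q * H - \<tau> - d * (1 - \<eta>) = - 2 * \<delta>" by (simp add: \<delta>_def)
  define g where "g = gcap K \<alpha> \<beta> \<nu>"
  define S where "S n = Sg K \<alpha> \<beta> \<nu> q n" for n
  have "(\<lambda>n. - log 2 (S n) / real n) \<longlonglongrightarrow> \<tau>" unfolding S_def \<tau>_def by (rule tau_tendsto[OF hp gm K al])
  then have "eventually (\<lambda>n. \<tau> - \<delta> < - log 2 (S n) / real n) sequentially"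
    by (rule order_tendstoD(1)) (use \<delta> in simp)
  then obtain N0 where N0: "\<And>n. n \<ge> N0 \<Longrightarrow> \<tau> - \<delta> < - log 2 (S n) / real n"
    unfolding eventually_sequentially by blast
  have Sp: "S n > 0" if "n \<ge> 1" for n unfolding S_def using Sg_pos[OF gm K that] .
  have Sbound: "S n \<le> 2 powr (- real n * (\<tau> - \<delta>))" if n: "n \<ge> N0" "n \<ge> 1" for n
  proof -
    have np: "real n > 0" using n by simp
    have "(\<tau> - \<delta>) * real n < - log 2 (S n)" using N0[OF n(1)] by (simp only: pos_less_divide_eq[OF np])
    then have "log 2 (S n) < - real n * (\<tau> - \<delta>)" by (simp add: algebra_simps)
    then have "2 powr (log 2 (S n)) < 2 powr (- real n * (\<tau> - \<delta>))" by (rule powr_less_mono) simp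
    then show ?thesis using Sp[OF n(2)] by simp
  qed
  define B where "B n = {u::'d letter list. length u = n \<and> u \<noteq> [] \<and> g u > 2 powr (- (real n - 1) * H)}" for n
  define A where "A n = {\<omega>\<in>space \<Omega>. \<exists>u\<in>B n. p u \<omega>}" for n
  have BW: "B n \<subseteq> W n" for n unfolding B_def by auto
  have Bfin: "finite (B n)" for n using W_finite BW finite_subset by blast
  have Ameas: "A n \<in> sets \<Omega>" for n
    unfolding A_def by (rule sets.sets_Collect_finite_Ex) (use p_meas Bfin in \<open>auto simp: B_def\<close>)
  define \<pi> where "\<pi> n = 2 powr (- d * (1 - \<eta>) * real n)" for n
  have Aprob: "measure \<Omega> (A n) \<le> real (card (B n)) * \<pi> n" for n
  proof -
    have "A n = (\<Union>u\<in>B n. {\<omega>\<in>space \<Omega>. p u \<omega>})" unfolding A_def by auto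
    then have "measure \<Omega> (A n) \<le> (\<Sum>u\<in>B n. measure \<Omega> {\<omega>\<in>space \<Omega>. p u \<omega>})"
      using finite_measure_subadditive_finite[OF Bfin, of "\<lambda>u. {\<omega>\<in>space \<Omega>. p u \<omega>}"] p_meas
      by (auto simp: B_def)
    also have "\<dots> = (\<Sum>u\<in>B n. \<pi> n)"
      by (rule sum.cong) (auto simp: B_def \<pi>_def d_def p_prob)
    finally show ?thesis by simp
  qed
  define t where "t n = 2 powr ((real n - 1) * H)" for n
  have tpos: "t n > 0" for n by (simp add: t_def)
  have cardB: "real (card (B n)) \<le> t n powr q * S n" if n: "n \<ge> 1" for n
  proof -
    have "real (card (B n)) = (\<Sum>u\<in>B n. 1)" by simp
    also have "\<dots> \<le> (\<Sum>u\<in>B n. (g u * t n) powr q)"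
    proof (rule sum_mono)
      fix u assume "u \<in> B n"
      then have "g u > 2 powr (- (real n - 1) * H)" by (simp add: B_def)
      then have "g u * t n > 2 powr (- (real n - 1) * H) * t n" using tpos by simp
      also have "2 powr (- (real n - 1) * H) * t n = 1" unfolding t_def by (simp add: algebra_simps flip: powr_add)
      finally show "1 \<le> (g u * t n) powr q" using q by (intro ge_one_powr_ge_zero) auto
    qed
    also have "\<dots> \<le> (\<Sum>u\<in>W n. (g u * t n) powr q)"
      by (rule sum_mono2[OF W_finite BW]) simp
    also have "\<dots> = (\<Sum>u\<in>W n. t n powr q * g u powr q)"
      by (rule sum.cong) (simp_all add: powr_mult mult.commute)
    also have "\<dots> = t n powr q * S n" unfolding S_def Sg_def g_def by (simp add: sum_distrib_left)
    finally show ?thesis .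
  qed
  define N1 where "N1 = max N0 1"
  have Abound: "norm (measure \<Omega> (A n)) \<le> (2 powr (- \<delta>)) ^ n" if n: "n \<ge> N1" for n
  proof -
    have n1: "n \<ge> 1" "n \<ge> N0" using n by (auto simp: N1_def)
    have pipos: "\<pi> n > 0" by (simp add: \<pi>_def)
    have "measure \<Omega> (A n) \<le> real (card (B n)) * \<pi> n" by (rule Aprob)
    also have "\<dots> \<le> (t n powr q * S n) * \<pi> n" using cardB[OF n1(1)] pipos by (intro mult_right_mono) auto
    also have "\<dots> \<le> (2 powr (real n * H * q) * 2 powr (- real n * (\<tau> - \<delta>))) * \<pi> n"
    proof -
      have "t n powr q = 2 powr ((real n - 1) * H * q)" unfolding t_def by (simp add: powr_powr)
      also have "\<dots> \<le> 2 powr (real n * H * q)"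
        by (rule powr_mono) (use H q in \<open>auto intro!: mult_right_mono\<close>)
      finally have a: "t n powr q \<le> 2 powr (real n * H * q)" .
      have "t n powr q * S n \<le> 2 powr (real n * H * q) * 2 powr (- real n * (\<tau> - \<delta>))"
        using a Sbound[OF n1(2) n1(1)] Sp[OF n1(1)] by (intro mult_mono) auto
      then show ?thesis using pipos by (intro mult_right_mono) auto
    qed
    also have "\<dots> = 2 powr (real n * H * q + (- real n * (\<tau> - \<delta>)) + (- d * (1 - \<eta>) * real n))"
      by (simp only: \<pi>_def powr_add)
    also have "real n * H * q + (- real n * (\<tau> - \<delta>)) + (- d * (1 - \<eta>) * real n)
        = real n * (q * H - \<tau> - d * (1 - \<eta>) + \<delta>)" by (simp add: algebra_simps)
    also have "\<dots> = - \<delta> * real n" unfolding qt' by (simp add: algebra_simps)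
    also have "2 powr (- \<delta> * real n) = (2 powr (- \<delta>)) ^ n"
    proof -
      have "(2 powr (- \<delta>)) ^ n = (2 powr (- \<delta>)) powr real n" by (rule powr_realpow[symmetric]) simp
      also have "\<dots> = 2 powr (- \<delta> * real n)" by (simp only: powr_powr)
      finally show ?thesis by simp
    qed
    finally show ?thesis by simp
  qed
  have sum: "summable (\<lambda>n. measure \<Omega> (A n))"
  proof (rule summable_comparison_test'[OF summable_geometric Abound])
    have "2 powr (- \<delta>) < 1" using \<delta> by (intro powr_less_one) auto
    then show "norm (2 powr (- \<delta>)) < 1" by simp
  qed
  have "AE \<omega> in \<Omega>. eventually (\<lambda>n. \<omega> \<in> space \<Omega> - A n) sequentially"
    by (rule borel_cantelli_AE1[OF Ameas _ sum]) (simp add: emeasure_eq_measure)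
  then show ?thesis
  proof (rule eventually_mono)
    fix \<omega> assume "eventually (\<lambda>n. \<omega> \<in> space \<Omega> - A n) sequentially"
    then obtain N where N: "\<And>n. n \<ge> N \<Longrightarrow> \<omega> \<in> space \<Omega> - A n" unfolding eventually_sequentially by blast
    show "\<exists>N. \<forall>n\<ge>N. \<forall>u::'d letter list. length u = n \<longrightarrow> u \<noteq> [] \<longrightarrow> p u \<omega> \<longrightarrow>
           gcap K \<alpha> \<beta> \<nu> u \<le> 2 powr (- (real n - 1) * H)"
    proof (intro exI allI impI)
      fix n and u :: "'d letter list" assume n: "n \<ge> N" and u: "length u = n" "u \<noteq> []" "p u \<omega>"
      show "gcap K \<alpha> \<beta> \<nu> u \<le> 2 powr (- (real n - 1) * H)"
      proof (rule ccontr)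
        assume "\<not> ?thesis"
        then have "u \<in> B n" using u by (auto simp: B_def g_def)
        then have "\<omega> \<in> A n" using N[OF n] u unfolding A_def by auto
        then show False using N[OF n] by blast
      qed
    qed
  qed
qed

end




theorem lemma4:
  fixes \<psi> :: "'d::finite seq \<Rightarrow> real" and \<nu> :: "'d seq measure"
    and K \<alpha> \<beta> \<eta> :: real and \<Omega> :: "'a measure" and p :: "'d letter list \<Rightarrow> 'a \<Rightarrow> bool"
  assumes "holder_potential \<psi>" and "gibbs_measure \<psi> \<nu>"
    and "K > 0" and "\<alpha> > 0" and "\<beta> \<ge> 0"
    and "\<not> cohomologous_to_constant \<psi>"
    and "0 < \<eta>" and "\<eta> < 1"
    and "sampling \<Omega> \<eta> p"
  shows "AE \<omega> in \<Omega>. \<forall>x::real^'d. (\<forall>i. 0 \<le> x $ i \<and> x $ i \<le> 1) \<longrightarrow>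
           liminf (\<lambda>j. ereal (log 2 (Mtilde K \<alpha> \<beta> \<nu> p \<omega> (xprefix x j)) / - real j))
             \<ge> ereal (H_l K \<alpha> \<beta> \<nu> \<eta>)"
proof -
  note hp = assms(1) and gm = assms(2) and K = assms(3) and be = assms(5)
    and et0 = assms(7) and et1 = assms(8) and samp = assms(9)
  have al: "\<alpha> \<ge> 0" using assms(4) by simp
  have et0': "0 \<le> \<eta>" using et0 by simp
  define Hl where "Hl = H_l K \<alpha> \<beta> \<nu> \<eta>"
  define M where "M \<omega> w = Mtilde K \<alpha> \<beta> \<nu> p \<omega> w" for \<omega> w
  define ne where "ne \<omega> \<longleftrightarrow> (\<forall>w. \<exists>v. v \<noteq> [] \<and> p (w@v) \<omega>)" for \<omega>
  have Hl0: "0 \<le> Hl" unfolding Hl_def by (rule Hl_facts(1)[OF hp gm K al be et0'])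
  have Hlq: "\<forall>H. 0 \<le> H \<and> H < Hl \<longrightarrow> (\<exists>q\<ge>0. q * H - tau K \<alpha> \<beta> \<nu> q < real CARD('d) * (1 - \<eta>))"
    unfolding Hl_def by (rule Hl_facts(2)[OF hp gm K al be et0'])
  have AEne: "AE \<omega> in \<Omega>. ne \<omega>" unfolding ne_def by (rule AE_nonempty[OF samp et0 et1])
  define Hk where "Hk k = Hl - 1 / real (Suc k)" for k
  define P where "P k \<omega> \<longleftrightarrow> (\<exists>J\<ge>1. \<forall>j\<ge>J. \<forall>w::'d letter list. length w = j \<longrightarrow> log 2 (M \<omega> w) \<le> Hk k * (- real j))" for k \<omega>
  have Mb: "0 < M \<omega> w \<and> M \<omega> w \<le> b"
    if ne: "ne \<omega>" and bd: "\<And>u v. length u = length w \<Longrightarrow> v \<noteq> [] \<Longrightarrow> p (u@v) \<omega> \<Longrightarrow> gcap K \<alpha> \<beta> \<nu> (u@v) \<le> b"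
    for \<omega> w b
    unfolding M_def
  proof (rule Mtilde_bound)
    fix u :: "'d letter list" assume u: "length u = length w"
    show "0 < Msamp K \<alpha> \<beta> \<nu> p \<omega> u \<and> Msamp K \<alpha> \<beta> \<nu> p \<omega> u \<le> b"
      by (rule Msamp_bound[OF gm K al be]) (use ne u bd in \<open>auto simp: ne_def\<close>)
  qed
  have AEk: "AE \<omega> in \<Omega>. ne \<omega> \<longrightarrow> P k \<omega>" for k
  proof (cases "Hk k \<ge> 0")
    case True
    have lt: "Hk k < Hl" by (simp add: Hk_def)
    obtain q where q: "q \<ge> 0" and qt: "q * Hk k - tau K \<alpha> \<beta> \<nu> q < real CARD('d) * (1 - \<eta>)"
      using Hlq True lt by blast
    have "AE \<omega> in \<Omega>. \<exists>N. \<forall>n\<ge>N. \<forall>u::'d letter list. length u = n \<longrightarrow> u \<noteq> [] \<longrightarrow> p u \<omega> \<longrightarrow>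
           gcap K \<alpha> \<beta> \<nu> u \<le> 2 powr (- (real n - 1) * Hk k)"
      by (rule AE_bad_finite[OF samp et0 et1 hp gm K al True q qt])
    then show ?thesis
    proof (rule eventually_mono, intro impI)
      fix \<omega> assume "\<exists>N. \<forall>n\<ge>N. \<forall>u::'d letter list. length u = n \<longrightarrow> u \<noteq> [] \<longrightarrow> p u \<omega> \<longrightarrow>
           gcap K \<alpha> \<beta> \<nu> u \<le> 2 powr (- (real n - 1) * Hk k)" and ne: "ne \<omega>"
      then obtain N where N: "\<And>n u. n \<ge> N \<Longrightarrow> length u = n \<Longrightarrow> u \<noteq> [] \<Longrightarrow> p u \<omega> \<Longrightarrow>
           gcap K \<alpha> \<beta> \<nu> u \<le> 2 powr (- (real n - 1) * Hk k)" by blast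
      show "P k \<omega>" unfolding P_def
      proof (intro exI[of _ "max N 1"] conjI allI impI)
        show "1 \<le> max N 1" by simp
        fix j and w :: "'d letter list" assume j: "max N 1 \<le> j" and w: "length w = j"
        have "0 < M \<omega> w \<and> M \<omega> w \<le> 2 powr (- real j * Hk k)"
        proof (rule Mb[OF ne])
          fix u v :: "'d letter list" assume u: "length u = length w" and v: "v \<noteq> []" and p: "p (u@v) \<omega>"
          have len: "length (u@v) \<ge> N" using u w j by simp
          have "gcap K \<alpha> \<beta> \<nu> (u@v) \<le> 2 powr (- (real (length (u@v)) - 1) * Hk k)"
            by (rule N[OF len refl]) (use v p in auto)
          also have "\<dots> \<le> 2 powr (- real j * Hk k)"
          proof (rule powr_mono)
            have "length v \<ge> 1" using v by (cases v) auto
            then have "real j \<le> real (length (u@v)) - 1" using u w by simp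
            then show "- (real (length (u@v)) - 1) * Hk k \<le> - real j * Hk k"
              using True by (intro mult_right_mono) auto
          qed simp
          finally show "gcap K \<alpha> \<beta> \<nu> (u@v) \<le> 2 powr (- real j * Hk k)" .
        qed
        then have "log 2 (M \<omega> w) \<le> log 2 (2 powr (- real j * Hk k))" by (intro log_mono) auto
        then show "log 2 (M \<omega> w) \<le> Hk k * (- real j)" by (simp add: mult.commute)
      qed
    qed
  next
    case False
    define J where "J = max 1 (nat \<lceil>log 2 K / (- Hk k)\<rceil>)"
    show ?thesis
    proof (rule AE_I2, intro impI)
      fix \<omega> assume ne: "ne \<omega>"
      show "P k \<omega>" unfolding P_def
      proof (intro exI[of _ J] conjI allI impI)
        show "1 \<le> J" by (simp add: J_def)
        fix j and w :: "'d letter list" assume j: "J \<le> j" and w: "length w = j"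
        have "0 < M \<omega> w \<and> M \<omega> w \<le> K"
          by (rule Mb[OF ne]) (rule gcap_le[OF gm K al be])
        then have "log 2 (M \<omega> w) \<le> log 2 K" by (intro log_mono) auto
        also have "log 2 K \<le> Hk k * (- real j)"
        proof -
          have nh: "- Hk k > 0" using False by simp
          have "log 2 K / (- Hk k) \<le> real (nat \<lceil>log 2 K / (- Hk k)\<rceil>)" by linarith
          also have "\<dots> \<le> real j" using j by (simp add: J_def)
          finally have "log 2 K / (- Hk k) \<le> real j" .
          then have "log 2 K \<le> real j * (- Hk k)" by (simp only: pos_divide_le_eq[OF nh])
          then show ?thesis by (simp add: algebra_simps)
        qed
        finally show "log 2 (M \<omega> w) \<le> Hk k * (- real j)" .
      qed
    qed
  qed
  have "AE \<omega> in \<Omega>. \<forall>k. ne \<omega> \<longrightarrow> P k \<omega>" by (subst AE_all_countable) (use AEk in blast)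
  with AEne have "AE \<omega> in \<Omega>. ne \<omega> \<and> (\<forall>k. ne \<omega> \<longrightarrow> P k \<omega>)" by (rule eventually_conj)
  then show ?thesis
  proof (rule eventually_mono, intro allI impI)
    fix \<omega> and x :: "real^'d" assume a: "ne \<omega> \<and> (\<forall>k. ne \<omega> \<longrightarrow> P k \<omega>)"
    have Pk: "P k \<omega>" for k using a by blast
    show "liminf (\<lambda>j. ereal (log 2 (Mtilde K \<alpha> \<beta> \<nu> p \<omega> (xprefix x j)) / - real j)) \<ge> ereal (H_l K \<alpha> \<beta> \<nu> \<eta>)"
      unfolding le_Liminf_iff Hl_def[symmetric]
    proof (intro allI impI)
      fix y assume y: "y < ereal Hl"
      obtain k where yk: "y < ereal (Hk k)"
      proof (cases y)
        case (real r)
        then have "0 < Hl - r" using y by simp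
        then obtain k where "inverse (real (Suc k)) < Hl - r" using reals_Archimedean by blast
        then have "y < ereal (Hk k)" using real by (simp add: Hk_def inverse_eq_divide)
        then show ?thesis by (rule that)
      next
        case PInf then show ?thesis using y by simp
      next
        case MInf then show ?thesis by (intro that[of 0]) simp
      qed
      obtain J where J: "J \<ge> 1" and JP: "\<And>j w. j \<ge> J \<Longrightarrow> length w = j \<Longrightarrow> log 2 (M \<omega> w) \<le> Hk k * (- real j)"
        using Pk[of k] unfolding P_def by blast
      show "\<forall>\<^sub>F j in sequentially. y < ereal (log 2 (Mtilde K \<alpha> \<beta> \<nu> p \<omega> (xprefix x j)) / - real j)"
        unfolding eventually_sequentially
      proof (intro exI[of _ J] allI impI)
        fix j assume j: "J \<le> j"
        have len: "length (xprefix x j) = j" by (simp add: xprefix_def)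
        have jn: "- real j < 0" using j J by simp
        have "log 2 (M \<omega> (xprefix x j)) \<le> Hk k * (- real j)" by (rule JP[OF j len])
        then have "Hk k \<le> log 2 (M \<omega> (xprefix x j)) / - real j" using jn by (simp only: neg_le_divide_eq)
        then have "ereal (Hk k) \<le> ereal (log 2 (Mtilde K \<alpha> \<beta> \<nu> p \<omega> (xprefix x j)) / - real j)"
          by (simp add: M_def)
        then show "y < ereal (log 2 (Mtilde K \<alpha> \<beta> \<nu> p \<omega> (xprefix x j)) / - real j)"
          using yk by (rule order.strict_trans2[rotated])
      qed
    qed
  qed
qed


end
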